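(* Let $0<r<1$ and let $(T_1,\dots,T_d)$ be a doubly commuting tuple of operators in $C_{1,r}$ acting on a Hilbert space $\mathcal H$. Then there exists a decomposition of $\mathcal H$ into an orthogonal sum of $2^d$ closed subspaces $\mathcal H_1,\dots,\mathcal H_{2^d}$ such that: (1) every $\mathcal H_j$, $1\le j\le 2^d$, is a joint reducing subspace for $T_1,\dots,T_d$; (2) $T_i|_{\mathcal H_j}$ is either in $\mathcal C_{1,r}$ or a c.n.u. $C_{1,r}$-contraction for $1\le i\le d$, $1\le j\le 2^d$; (3) if $\Omega_d$ is the collection of all functions $\omega:\{1,\dots,d\}\to\{t_1,t_2\}$, then corresponding to every $\omega\in\Omega_d$ there is a unique subspace $\mathcal H_\ell$ ($1\le\ell\le 2^d$) such that for each $1\le j\le d$ the operator $T_j|_{\mathcal H_\ell}$ is of type $\omega(j)$; (4) $\mathcal H_1$ is the maximal joint reducing subspace for $T_1,\dots,T_d$ such that $T_1|_{\mathcal H_1},\dots,T_d|_{\mathcal H_1}$ are in $\mathcal C_{1,r}$; (5) $\mathcal H_{2^d}$ is the maximal joint reducing subspace for $T_1,\dots,T_d$ such that $T_1|_{\mathcal H_{2^d}},\dots,T_d|_{\mathcal H_{2^d}}$ are c.n.u. $C_{1,r}$-contractions. The decomposition is uniquely determined. One or more of the $\mathcal H_j$ may be $\{0\}$.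
   Context: $C_{1,r}=\{T: T\text{ invertible},\ \|T\|\le1,\ \|rT^{-1}\|\le1\}$. $\mathcal C_{1,r}$ is the class of operators $J$ on a Hilbert space $\mathcal L$ for which there exist orthogonal projections $P_0,P_1$ on $\mathcal L$ with $P_0+P_1=I_{\mathcal L}$ and $J^*J=P_0+r^2P_1$. An operator $T\in C_{1,r}$ on $\mathcal H$ is a c.n.u. $C_{1,r}$-contraction if $\mathcal H$ has no non-zero closed subspace that reduces $T$ to an operator in $\mathcal C_{1,r}$. An operator in $C_{1,r}$ is of type $t_1$ if it is in $\mathcal C_{1,r}$ and of type $t_2$ if it is a c.n.u. $C_{1,r}$-contraction. A tuple is doubly commuting if $T_iT_j=T_jT_i$ for all $i,j$ and $T_iT_j^*=T_j^*T_i$ for $i\ne j$. *)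

theory Defs
  imports "HOL-Analysis.Analysis" "HOL-Library.FuncSet"
begin

class complex_vector = real_vector +
  fixes scaleC :: "complex \<Rightarrow> 'a \<Rightarrow> 'a"
  assumes scaleC_add_right: "scaleC a (x + y) = scaleC a x + scaleC a y"
    and scaleC_add_left: "scaleC (a + b) x = scaleC a x + scaleC b x"
    and scaleC_scaleC: "scaleC a (scaleC b x) = scaleC (a * b) x"
    and scaleC_one: "scaleC 1 x = x"
    and scaleR_scaleC: "scaleR r x = scaleC (complex_of_real r) x"

class chilbert_space = complex_vector + banach +
  fixes cinner :: "'a \<Rightarrow> 'a \<Rightarrow> complex"
  assumes cinner_add_right: "cinner x (y + z) = cinner x y + cinner x z"
    and cinner_scaleC_right: "cinner x (scaleC c y) = c * cinner x y"
    and cinner_commute: "cinner x y = cnj (cinner y x)"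
    and cinner_self_nonneg: "0 \<le> Re (cinner x x)"
    and cinner_self_eq_zero: "cinner x x = 0 \<longleftrightarrow> x = 0"
    and norm_eq_sqrt_cinner: "norm x = sqrt (Re (cinner x x))"

definition closed_subspace :: "'a::chilbert_space set \<Rightarrow> bool" where
  "closed_subspace M \<longleftrightarrow> 0 \<in> M \<and> (\<forall>x\<in>M. \<forall>y\<in>M. x + y \<in> M)
     \<and> (\<forall>c. \<forall>x\<in>M. scaleC c x \<in> M) \<and> closed M"

definition orth :: "'a::chilbert_space set \<Rightarrow> 'a set" where
  "orth M = {y. \<forall>x\<in>M. cinner x y = 0}"

definition bounded_op :: "('a::chilbert_space \<Rightarrow> 'a) \<Rightarrow> bool" where
  "bounded_op T \<longleftrightarrow> (\<forall>x y. T (x + y) = T x + T y) \<and> (\<forall>c x. T (scaleC c x) = scaleC c (T x))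
     \<and> (\<exists>K. \<forall>x. norm (T x) \<le> K * norm x)"

definition adj :: "('a::chilbert_space \<Rightarrow> 'a) \<Rightarrow> ('a \<Rightarrow> 'a)" where
  "adj T = (SOME S. \<forall>x y. cinner (T x) y = cinner x (S y))"

text \<open>\<open>S\<close> is the adjoint of the restriction of \<open>J\<close> to the Hilbert space \<open>H\<close> (a closed
subspace which is invariant under \<open>J\<close>).\<close>
definition adjoint_on :: "'a::chilbert_space set \<Rightarrow> ('a \<Rightarrow> 'a) \<Rightarrow> ('a \<Rightarrow> 'a) \<Rightarrow> bool" where
  "adjoint_on H J S \<longleftrightarrow> S ` H \<subseteq> H \<and> (\<forall>x\<in>H. \<forall>y\<in>H. cinner (J x) y = cinner x (S y))"

definition orth_proj_on :: "'a::chilbert_space set \<Rightarrow> ('a \<Rightarrow> 'a) \<Rightarrow> bool" where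
  "orth_proj_on H P \<longleftrightarrow> P ` H \<subseteq> H \<and> (\<forall>x\<in>H. P (P x) = P x)
     \<and> (\<forall>x\<in>H. \<forall>y\<in>H. cinner (P x) y = cinner x (P y))"

definition reduces_in :: "'a::chilbert_space set \<Rightarrow> 'a set \<Rightarrow> ('a \<Rightarrow> 'a) \<Rightarrow> bool" where
  "reduces_in H M T \<longleftrightarrow> closed_subspace M \<and> M \<subseteq> H \<and> T ` M \<subseteq> M
     \<and> T ` (H \<inter> orth M) \<subseteq> H \<inter> orth M"

text \<open>\<open>T|_H \<in> C_{1,r}\<close>: \<open>T|_H\<close> is invertible on \<open>H\<close>, \<open>\<parallel>T|_H\<parallel> \<le> 1\<close> and \<open>\<parallel>r (T|_H)\<inverse>\<parallel> \<le> 1\<close>.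
(The operators considered are restrictions of bounded operators, so boundedness
of \<open>T|_H\<close> is inherited; boundedness of the inverse is part of the norm condition.)\<close>
definition C1r :: "'a::chilbert_space set \<Rightarrow> real \<Rightarrow> ('a \<Rightarrow> 'a) \<Rightarrow> bool" where
  "C1r H r T \<longleftrightarrow> bij_betw T H H
     \<and> (\<forall>x\<in>H. norm (T x) \<le> norm x)
     \<and> (\<forall>y\<in>H. norm (scaleR r (the_inv_into H T y)) \<le> norm y)"

definition Cscr1r :: "'a::chilbert_space set \<Rightarrow> real \<Rightarrow> ('a \<Rightarrow> 'a) \<Rightarrow> bool" where
  "Cscr1r H r J \<longleftrightarrow> (\<exists>P0 P1. orth_proj_on H P0 \<and> orth_proj_on H P1
     \<and> (\<forall>x\<in>H. P0 x + P1 x = x)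
     \<and> (\<exists>S. adjoint_on H J S \<and> (\<forall>x\<in>H. S (J x) = P0 x + scaleR (r\<^sup>2) (P1 x))))"

definition cnu :: "'a::chilbert_space set \<Rightarrow> real \<Rightarrow> ('a \<Rightarrow> 'a) \<Rightarrow> bool" where
  "cnu H r T \<longleftrightarrow> C1r H r T
     \<and> \<not> (\<exists>M. M \<noteq> {0} \<and> reduces_in H M T \<and> Cscr1r M r T)"

datatype optype = t1 | t2

fun has_type :: "'a::chilbert_space set \<Rightarrow> real \<Rightarrow> ('a \<Rightarrow> 'a) \<Rightarrow> optype \<Rightarrow> bool" where
  "has_type H r T t1 \<longleftrightarrow> C1r H r T \<and> Cscr1r H r T"
| "has_type H r T t2 \<longleftrightarrow> cnu H r T"

definition doubly_commuting :: "nat \<Rightarrow> (nat \<Rightarrow> 'a::chilbert_space \<Rightarrow> 'a) \<Rightarrow> bool" where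
  "doubly_commuting d T \<longleftrightarrow>
     (\<forall>i\<in>{1..d}. \<forall>j\<in>{1..d}. T i \<circ> T j = T j \<circ> T i)
   \<and> (\<forall>i\<in>{1..d}. \<forall>j\<in>{1..d}. i \<noteq> j \<longrightarrow> T i \<circ> adj (T j) = adj (T j) \<circ> T i)"

definition Omega :: "nat \<Rightarrow> (nat \<Rightarrow> optype) set" where
  "Omega d = {1..d} \<rightarrow>\<^sub>E (UNIV :: optype set)"

definition is_decomposition ::
    "nat \<Rightarrow> real \<Rightarrow> (nat \<Rightarrow> 'a::chilbert_space \<Rightarrow> 'a) \<Rightarrow> (nat \<Rightarrow> 'a set) \<Rightarrow> ((nat \<Rightarrow> optype) \<Rightarrow> nat) \<Rightarrow> bool" where
  "is_decomposition d r T Hs lab \<longleftrightarrow>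
     \<comment> \<open>orthogonal sum of closed subspaces equal to the whole space\<close>
     (\<forall>j\<in>{1..2^d}. closed_subspace (Hs j))
   \<and> (\<forall>j\<in>{1..2^d}. \<forall>k\<in>{1..2^d}. j \<noteq> k \<longrightarrow> (\<forall>x\<in>Hs j. \<forall>y\<in>Hs k. cinner x y = 0))
   \<and> (\<forall>x. \<exists>f. (\<forall>j\<in>{1..2^d}. f j \<in> Hs j) \<and> x = (\<Sum>j=1..2^d. f j))
     \<comment> \<open>(1) joint reducing\<close>
   \<and> (\<forall>i\<in>{1..d}. \<forall>j\<in>{1..2^d}. reduces_in UNIV (Hs j) (T i))
     \<comment> \<open>(2)\<close>
   \<and> (\<forall>i\<in>{1..d}. \<forall>j\<in>{1..2^d}. has_type (Hs j) r (T i) t1 \<or> has_type (Hs j) r (T i) t2)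
     \<comment> \<open>(3)\<close>
   \<and> bij_betw lab (Omega d) {1..2^d}
   \<and> (\<forall>\<omega>\<in>Omega d. \<forall>j\<in>{1..d}. has_type (Hs (lab \<omega>)) r (T j) (\<omega> j))
     \<comment> \<open>(4)\<close>
   \<and> (\<forall>i\<in>{1..d}. has_type (Hs 1) r (T i) t1)
   \<and> (\<forall>M. (\<forall>i\<in>{1..d}. reduces_in UNIV M (T i) \<and> has_type M r (T i) t1) \<longrightarrow> M \<subseteq> Hs 1)
     \<comment> \<open>(5)\<close>
   \<and> (\<forall>i\<in>{1..d}. has_type (Hs (2^d)) r (T i) t2)
   \<and> (\<forall>M. (\<forall>i\<in>{1..d}. reduces_in UNIV M (T i) \<and> has_type M r (T i) t2) \<longrightarrow> M \<subseteq> Hs (2^d))"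

end

theory Submission
  imports Defs
begin

lemma cinner_add_left: "cinner (x + y) z = cinner x z + cinner y z"
  by (metis cinner_commute cinner_add_right complex_cnj_add)

lemma cinner_scaleC_left: "cinner (scaleC c x) y = cnj c * cinner x y"
  by (metis cinner_commute cinner_scaleC_right complex_cnj_mult complex_cnj_cnj)

lemma cinner_zero_right[simp]: "cinner x 0 = 0"
  using cinner_add_right[of x 0 0] by simp

lemma cinner_zero_left[simp]: "cinner 0 x = 0"
  using cinner_add_left[of 0 0 x] by simp

lemma cinner_minus_right: "cinner x (- y) = - cinner x y"
  using cinner_add_right[of x y "-y"] by (simp add: add_eq_0_iff)

lemma cinner_minus_left: "cinner (- x) y = - cinner x y"
  using cinner_add_left[of x "-x" y] by (simp add: add_eq_0_iff)

lemma cinner_diff_right: "cinner x (y - z) = cinner x y - cinner x z"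
  using cinner_add_right[of x y "-z"] by (simp add: cinner_minus_right)

lemma cinner_diff_left: "cinner (x - y) z = cinner x z - cinner y z"
  using cinner_add_left[of x "-y" z] by (simp add: cinner_minus_left)

lemma cinner_scaleR_right: "cinner x (scaleR a y) = complex_of_real a * cinner x y"
  by (simp add: scaleR_scaleC cinner_scaleC_right)

lemma cinner_scaleR_left: "cinner (scaleR a x) y = complex_of_real a * cinner x y"
  by (simp add: scaleR_scaleC cinner_scaleC_left)

lemma cinner_sum_right: "cinner x (sum f A) = (\<Sum>a\<in>A. cinner x (f a))"
  by (induction A rule: infinite_finite_induct) (auto simp: cinner_add_right)

lemma cinner_sum_left: "cinner (sum f A) x = (\<Sum>a\<in>A. cinner (f a) x)"
  by (induction A rule: infinite_finite_induct) (auto simp: cinner_add_left)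

lemma scaleC_zero_left[simp]: "scaleC 0 x = 0"
  by (metis scaleR_scaleC scale_zero_left of_real_0)

lemma scaleC_zero_right[simp]: "scaleC c 0 = 0"
  by (metis scaleC_add_right add_cancel_right_right)

lemma scaleC_minus_right: "scaleC c (- x) = - scaleC c x"
  by (metis scaleC_add_right add.right_inverse scaleC_zero_right eq_neg_iff_add_eq_0)

lemma scaleC_diff_right: "scaleC c (x - y) = scaleC c x - scaleC c y"
  by (metis scaleC_add_right scaleC_minus_right diff_conv_add_uminus)

lemma scaleC_diff_left: "scaleC (a - b) x = scaleC a x - scaleC b x"
  by (metis scaleC_add_left add_diff_cancel diff_add_cancel eq_diff_eq)

lemma cinner_self_real: "cinner x x = complex_of_real (Re (cinner x x))"
proof -
  have "Im (cinner x x) = 0"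
    using cinner_commute[of x x] by (metis cnj.sel(2) equation_minus_iff zero_complex.sel(2) 
        complex_eq_iff neg_equal_zero)
  then show ?thesis by (simp add: complex_eq_iff)
qed

lemma norm_sq_cinner: "(norm x)^2 = Re (cinner x x)"
  by (simp add: norm_eq_sqrt_cinner cinner_self_nonneg)

lemma cinner_self_norm: "cinner x x = complex_of_real ((norm x)^2)"
  by (metis cinner_self_real norm_sq_cinner)

lemma cinner_expand:
  "cinner (x - scaleC t y) (x - scaleC t y) = cinner x x - t * cinner x y - cnj t * cinner y x + cnj t * t * cinner y y"
  by (simp add: cinner_diff_left cinner_diff_right cinner_scaleC_left cinner_scaleC_right algebra_simps)

lemma cauchy_schwarz: "cmod (cinner x y) \<le> norm x * norm y"
proof (cases "y = 0")
  case True then show ?thesis by simp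
next
  case False
  define a where "a = cinner y x"
  define N where "N = (norm y)^2"
  have N: "N > 0" using False by (simp add: N_def)
  have xy: "cinner x y = cnj a" by (simp add: a_def cinner_commute[of x y])
  define t where "t = a / complex_of_real N"
  have "0 \<le> Re (cinner (x - scaleC t y) (x - scaleC t y))" by (rule cinner_self_nonneg)
  also have "cinner (x - scaleC t y) (x - scaleC t y) = complex_of_real ((norm x)^2) - complex_of_real ((cmod a)^2 / N)"
    unfolding cinner_expand xy cinner_self_norm[of x] cinner_self_norm[of y] N_def[symmetric] a_def[symmetric]
    using N by (simp add: t_def field_simps complex_norm_square[symmetric] power2_eq_square del: of_real_power)
  finally have "(cmod a)^2 \<le> (norm x)^2 * N" using N by (simp add: field_simps)
  also have "\<dots> = (norm x * norm y)^2" by (simp add: N_def power_mult_distrib)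
  finally have "cmod a \<le> norm x * norm y"
    by (meson norm_ge_zero mult_nonneg_nonneg power2_le_imp_le)
  then show ?thesis using xy by (simp add: a_def)
qed


lemma sub_proj_norm:
  assumes "y \<noteq> 0"
  shows "(norm (x - scaleC (cinner y x / complex_of_real ((norm y)^2)) y))^2 = (norm x)^2 - (cmod (cinner y x))^2/(norm y)^2"
proof -
  define a where "a = cinner y x"
  define N where "N = (norm y)^2"
  have N: "N > 0" using assms by (simp add: N_def)
  have xy: "cinner x y = cnj a" by (simp add: a_def cinner_commute[of x y])
  define t where "t = a / complex_of_real N"
  have eq: "cinner (x - scaleC t y) (x - scaleC t y) = complex_of_real ((norm x)^2) - complex_of_real ((cmod a)^2 / N)"
    unfolding cinner_expand xy cinner_self_norm[of x] cinner_self_norm[of y] N_def[symmetric] a_def[symmetric]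
    using N by (simp add: t_def field_simps complex_norm_square[symmetric] power2_eq_square del: of_real_power)
  have "(norm (x - scaleC t y))^2 = (norm x)^2 - (cmod a)^2 / N"
    unfolding norm_sq_cinner[of "x - scaleC t y"] eq by (simp only: Re_complex_of_real minus_complex.sel)
  then show ?thesis by (simp add: t_def a_def N_def)
qed

lemma parallelogram: "(norm ((a::'a::chilbert_space) + b))^2 + (norm (a - b))^2 = 2 * (norm a)^2 + 2 * (norm b)^2"
  by (simp add: norm_sq_cinner cinner_add_left cinner_add_right cinner_diff_left cinner_diff_right)

lemma cinner_bounded_linear: "bounded_linear (\<lambda>y. cinner x y)"
proof (rule bounded_linear_intro[where K="norm x"])
  show "cinner x (a + b) = cinner x a + cinner x b" for a b by (rule cinner_add_right)
  show "cinner x (r *\<^sub>R a) = r *\<^sub>R cinner x a" for r a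
    by (simp add: cinner_scaleR_right scaleR_conv_of_real)
  show "norm (cinner x a) \<le> norm a * norm x" for a using cauchy_schwarz[of x a] by (simp add: mult.commute)
qed

lemma closed_orth: "closed (orth M)"
proof -
  have "orth M = (\<Inter>x\<in>M. {y. cinner x y = 0})" by (auto simp: orth_def)
  moreover have "closed {y. cinner x y = 0}" for x
    by (intro closed_Collect_eq continuous_intros bounded_linear.continuous_on[OF cinner_bounded_linear])
  ultimately show ?thesis by (metis closed_INT)
qed

lemma cs_zero: "closed_subspace M \<Longrightarrow> 0 \<in> M" by (simp add: closed_subspace_def)
lemma cs_add: "closed_subspace M \<Longrightarrow> x \<in> M \<Longrightarrow> y \<in> M \<Longrightarrow> x + y \<in> M" by (simp add: closed_subspace_def)
lemma cs_scaleC: "closed_subspace M \<Longrightarrow> x \<in> M \<Longrightarrow> scaleC c x \<in> M" by (simp add: closed_subspace_def)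
lemma cs_closed: "closed_subspace M \<Longrightarrow> closed M" by (simp add: closed_subspace_def)
lemma cs_scaleR: "closed_subspace M \<Longrightarrow> x \<in> M \<Longrightarrow> scaleR c x \<in> M" by (simp add: cs_scaleC scaleR_scaleC)
lemma cs_uminus: "closed_subspace M \<Longrightarrow> x \<in> M \<Longrightarrow> - x \<in> M"
  using cs_scaleR[of M x "-1"] by simp
lemma cs_diff: "closed_subspace M \<Longrightarrow> x \<in> M \<Longrightarrow> y \<in> M \<Longrightarrow> x - y \<in> M"
  using cs_add[of M x "-y"] cs_uminus[of M y] by simp
lemma cs_sum: "closed_subspace M \<Longrightarrow> (\<And>a. a \<in> A \<Longrightarrow> f a \<in> M) \<Longrightarrow> sum f A \<in> M"
  by (induction A rule: infinite_finite_induct) (auto simp: cs_zero cs_add)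

lemma orth_cs: "closed_subspace (orth M)"
  unfolding closed_subspace_def
  using closed_orth[unfolded orth_def] by (auto simp: orth_def cinner_add_right cinner_scaleC_right)

lemma minimizer_orth:
  assumes M: "closed_subspace M" and p: "p \<in> M" and min: "\<And>m. m \<in> M \<Longrightarrow> norm (x - p) \<le> norm (x - m)"
  shows "x - p \<in> orth M"
  unfolding orth_def
proof (safe)
  fix m assume m: "m \<in> M"
  show "cinner m (x - p) = 0"
  proof (rule ccontr)
    assume ne: "cinner m (x - p) \<noteq> 0"
    then have "m \<noteq> 0" by auto
    define t where "t = cinner m (x - p) / complex_of_real ((norm m)^2)"
    have "p + scaleC t m \<in> M" using M p m by (simp add: cs_add cs_scaleC)
    then have "norm (x - p) \<le> norm (x - (p + scaleC t m))" by (rule min)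
    also have "x - (p + scaleC t m) = (x - p) - scaleC t m" by simp
    finally have "(norm (x - p))^2 \<le> (norm ((x - p) - scaleC t m))^2" by (simp add: power_mono)
    also have "\<dots> = (norm (x - p))^2 - (cmod (cinner m (x - p)))^2/(norm m)^2"
      unfolding t_def by (rule sub_proj_norm[OF \<open>m \<noteq> 0\<close>])
    finally have "(cmod (cinner m (x - p)))^2/(norm m)^2 \<le> 0" by simp
    moreover have "(cmod (cinner m (x - p)))^2/(norm m)^2 > 0" using ne \<open>m \<noteq> 0\<close> by simp
    ultimately show False by simp
  qed
qed

lemma minimizer_exists:
  assumes M: "closed_subspace M"
  shows "\<exists>p\<in>M. \<forall>m\<in>M. norm (x - p) \<le> norm (x - m)"
proof -
  define S where "S = (\<lambda>m. norm (x - m)) ` M"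
  define D where "D = Inf S"
  have Sne: "S \<noteq> {}" using cs_zero[OF M] by (auto simp: S_def)
  have Sbdd: "bdd_below S" by (auto simp: S_def bdd_below_def intro!: exI[of _ 0])
  have Dle: "D \<le> norm (x - m)" if "m \<in> M" for m
    unfolding D_def by (rule cInf_lower) (use that Sbdd in \<open>auto simp: S_def\<close>)
  have D0: "D \<ge> 0" unfolding D_def by (rule cInf_greatest[OF Sne]) (auto simp: S_def)
  define e where "e = (\<lambda>n::nat. inverse (real (Suc n)))"
  have epos: "e n > 0" for n by (simp add: e_def)
  have e1: "e n \<le> 1" for n by (simp add: e_def inverse_le_1_iff)
  have "\<exists>m\<in>M. norm (x - m) < D + e n" for n
  proof -
    have "Inf S < D + e n" using epos[of n] by (simp add: D_def)
    then obtain s where "s \<in> S" "s < D + e n" using cInf_less_iff[OF Sne Sbdd] by auto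
    then show ?thesis by (auto simp: S_def)
  qed
  then obtain m where mM: "\<And>n. m n \<in> M" and mlt: "\<And>n. norm (x - m n) < D + e n" by metis
  have sq: "(norm (x - m n))^2 \<le> D^2 + (2*D+1) * e n" for n
  proof -
    have "(norm (x - m n))^2 \<le> (D + e n)^2"
      using mlt[of n] by (intro power_mono) auto
    also have "\<dots> = D^2 + 2*D*e n + e n * e n" by (simp add: power2_eq_square algebra_simps)
    also have "e n * e n \<le> e n" using e1[of n] epos[of n] by (simp add: mult_le_cancel_right1)
    finally show ?thesis by (simp add: algebra_simps)
  qed
  have diff: "(norm (m n - m k))^2 \<le> 2*(2*D+1) * (e n + e k)" for n k
  proof -
    have mid: "(1/2::real) *\<^sub>R (m n + m k) \<in> M" using M mM by (simp add: cs_add cs_scaleR)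
    have "x - m n + (x - m k) = 2 *\<^sub>R (x - (1/2::real) *\<^sub>R (m n + m k))" by (simp add: algebra_simps scaleR_2)
    then have "norm (x - m n + (x - m k)) = 2 * norm (x - (1/2::real) *\<^sub>R (m n + m k))" by simp
    then have "norm (x - m n + (x - m k)) \<ge> 2 * D" using Dle[OF mid] by simp
    then have big: "(norm (x - m n + (x - m k)))^2 \<ge> 4 * D^2"
    proof -
      have "(2*D)^2 \<le> (norm (x - m n + (x - m k)))^2" by (rule power_mono) (use D0 \<open>_ \<ge> 2 * D\<close> in auto)
      then show ?thesis by (simp add: power_mult_distrib)
    qed
    have "(norm (m n - m k))^2 = (norm ((x - m k) - (x - m n)))^2" by (simp add: norm_minus_commute)
    also have "\<dots> = 2 * (norm (x - m n))^2 + 2 * (norm (x - m k))^2 - (norm (x - m n + (x - m k)))^2"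
      using parallelogram[of "x - m k" "x - m n"] by (simp add: add.commute)
    also have "\<dots> \<le> 2 * (D^2 + (2*D+1) * e n) + 2 * (D^2 + (2*D+1) * e k) - 4 * D^2"
      using sq[of n] sq[of k] big by smt
    also have "\<dots> = 2*(2*D+1) * (e n + e k)" by (simp add: algebra_simps)
    finally show ?thesis .
  qed
  have "Cauchy m"
  proof (rule metric_CauchyI)
    fix eps :: real assume eps: "eps > 0"
    define C where "C = 4*(2*D+1)"
    have C: "C > 0" using D0 by (simp add: C_def)
    obtain N :: nat where N: "real N > C / eps^2" using reals_Archimedean2 by blast
    show "\<exists>N. \<forall>a\<ge>N. \<forall>b\<ge>N. dist (m a) (m b) < eps"
    proof (intro exI allI impI)
      fix a b assume a: "a \<ge> N" and b: "b \<ge> N"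
      have eN: "e n < eps^2 / C" if "n \<ge> N" for n
      proof -
        have "C / eps^2 < real (Suc n)" using N that by linarith
        then have "C < real (Suc n) * eps^2" using eps by (simp add: field_simps)
        then show ?thesis using C eps by (simp add: e_def field_simps)
      qed
      have "(dist (m a) (m b))^2 \<le> 2*(2*D+1) * (e a + e b)" unfolding dist_norm by (rule diff)
      also have "\<dots> < 2*(2*D+1) * (eps^2 / C + eps^2 / C)"
        using eN[OF a] eN[OF b] D0 by (intro mult_strict_left_mono) auto
      also have "\<dots> = C * (eps^2 / C)" by (simp add: C_def algebra_simps)
      also have "\<dots> = eps^2" using C by simp
      finally show "dist (m a) (m b) < eps"
        using eps by (meson less_le power_less_imp_less_base zero_le_dist)
    qed
  qed
  then obtain p where lim: "m \<longlonglongrightarrow> p" using Cauchy_convergent_iff convergent_def by blast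
  have pM: "p \<in> M" using closed_sequentially[OF cs_closed[OF M] _ lim] mM by auto
  have "norm (x - p) \<le> D"
  proof (rule tendsto_le[OF trivial_limit_sequentially])
    show "(\<lambda>n. norm (x - m n)) \<longlonglongrightarrow> norm (x - p)" by (intro tendsto_intros lim)
    show "(\<lambda>n. D + e n) \<longlonglongrightarrow> D" unfolding e_def
      using tendsto_add[OF tendsto_const LIMSEQ_inverse_real_of_nat, of D] by simp
    show "\<forall>\<^sub>F n in sequentially. norm (x - m n) \<le> D + e n" using mlt by (simp add: less_imp_le)
  qed
  then show ?thesis using pM Dle by (meson order.trans)
qed

lemma proj_exists:
  assumes "closed_subspace M"
  shows "\<exists>p\<in>M. x - p \<in> orth M"
  using minimizer_exists[OF assms, of x] minimizer_orth[OF assms] by blast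


lemma cinner_eq_zero_self: "cinner x x = 0 \<Longrightarrow> x = 0" using cinner_self_eq_zero by blast

lemma orth_inter: "x \<in> M \<Longrightarrow> x \<in> orth M \<Longrightarrow> x = 0"
  by (auto simp: orth_def intro: cinner_eq_zero_self)

lemma orth_sym: "x \<in> M \<Longrightarrow> y \<in> orth M \<Longrightarrow> cinner y x = 0"
  by (metis (mono_tags, lifting) cinner_commute complex_cnj_zero mem_Collect_eq orth_def)

lemma ext_cinner: "(\<And>x. cinner x a = cinner x b) \<Longrightarrow> a = b"
proof -
  assume h: "\<And>x. cinner x a = cinner x b"
  have "cinner (a - b) (a - b) = 0" using h[of "a - b"] by (simp add: cinner_diff_right)
  then have "a - b = 0" by (rule cinner_eq_zero_self)
  then show "a = b" by simp
qed

definition proj :: "'a::chilbert_space set \<Rightarrow> 'a \<Rightarrow> 'a" where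
  "proj M x = (SOME p. p \<in> M \<and> x - p \<in> orth M)"

lemma proj_props:
  assumes "closed_subspace M" shows "proj M x \<in> M \<and> x - proj M x \<in> orth M"
  unfolding proj_def by (rule someI_ex) (use proj_exists[OF assms, of x] in blast)

lemma proj_in: "closed_subspace M \<Longrightarrow> proj M x \<in> M" using proj_props by blast
lemma proj_orth: "closed_subspace M \<Longrightarrow> x - proj M x \<in> orth M" using proj_props by blast

lemma proj_unique:
  assumes M: "closed_subspace M" and p: "p \<in> M" and o: "x - p \<in> orth M"
  shows "proj M x = p"
proof -
  have "p - proj M x \<in> M" using M p proj_in[OF M] by (simp add: cs_diff)
  moreover have "p - proj M x = (x - proj M x) - (x - p)" by simp
  then have "p - proj M x \<in> orth M" using orth_cs[of M] proj_orth[OF M] o by (metis cs_diff)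
  ultimately show ?thesis using orth_inter by fastforce
qed

lemma proj_id: "closed_subspace M \<Longrightarrow> x \<in> M \<Longrightarrow> proj M x = x"
  by (rule proj_unique) (auto simp: orth_def)

lemma proj_zero_orth: "closed_subspace M \<Longrightarrow> x \<in> orth M \<Longrightarrow> proj M x = 0"
  by (rule proj_unique) (auto simp: cs_zero)

lemma proj_add: assumes M: "closed_subspace M" shows "proj M (x + y) = proj M x + proj M y"
proof (rule proj_unique[OF M])
  show "proj M x + proj M y \<in> M" using M by (simp add: cs_add proj_in)
  have "x + y - (proj M x + proj M y) = (x - proj M x) + (y - proj M y)" by simp
  then show "x + y - (proj M x + proj M y) \<in> orth M" using orth_cs[of M] proj_orth[OF M] by (metis cs_add)
qed

lemma proj_scaleC: assumes M: "closed_subspace M" shows "proj M (scaleC c x) = scaleC c (proj M x)"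
proof (rule proj_unique[OF M])
  show "scaleC c (proj M x) \<in> M" using M by (simp add: cs_scaleC proj_in)
  have "scaleC c x - scaleC c (proj M x) = scaleC c (x - proj M x)" by (simp add: scaleC_diff_right)
  then show "scaleC c x - scaleC c (proj M x) \<in> orth M" using orth_cs[of M] proj_orth[OF M] by (metis cs_scaleC)
qed

lemma proj_selfadj: assumes M: "closed_subspace M" shows "cinner (proj M x) y = cinner x (proj M y)"
proof -
  have "cinner (proj M x) y = cinner (proj M x) (proj M y + (y - proj M y))" by simp
  also have "\<dots> = cinner (proj M x) (proj M y)"
  proof -
    have "cinner (proj M x) (y - proj M y) = 0" using proj_orth[OF M, of y] proj_in[OF M, of x] by (simp add: orth_def)
    then show ?thesis by (simp add: cinner_diff_right)
  qed
  also have "\<dots> = cinner (proj M x + (x - proj M x)) (proj M y)"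
    using orth_sym[OF proj_in[OF M, of y] proj_orth[OF M, of x]] by (simp add: cinner_diff_left)
  finally show ?thesis by simp
qed

lemma orth_orth: assumes M: "closed_subspace M" shows "orth (orth M) = M"
proof
  show "M \<subseteq> orth (orth M)" by (auto simp: orth_def intro: orth_sym)
  show "orth (orth M) \<subseteq> M"
  proof
    fix x assume x: "x \<in> orth (orth M)"
    have "proj M x \<in> orth (orth M)" using proj_in[OF M] by (auto simp: orth_def intro: orth_sym)
    then have "x - proj M x \<in> orth (orth M)" using x orth_cs by (metis cs_diff)
    then have "x - proj M x = 0" using proj_orth[OF M] orth_inter by blast
    then show "x \<in> M" using proj_in[OF M, of x] by simp
  qed
qed

definition lin :: "('a::chilbert_space \<Rightarrow> 'a) \<Rightarrow> bool" where
  "lin A \<longleftrightarrow> (\<forall>x y. A (x + y) = A x + A y) \<and> (\<forall>c x. A (scaleC c x) = scaleC c (A x))"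

lemma lin_linear: "lin A \<Longrightarrow> linear A"
  unfolding lin_def by (intro linearI) (auto simp: scaleR_scaleC)

lemma lin_add: "lin A \<Longrightarrow> A (x + y) = A x + A y" by (simp add: lin_def)
lemma lin_scaleC: "lin A \<Longrightarrow> A (scaleC c x) = scaleC c (A x)" by (simp add: lin_def)
lemma lin_diff: "lin A \<Longrightarrow> A (x - y) = A x - A y" using lin_linear linear_diff by blast
lemma lin_zero: "lin A \<Longrightarrow> A 0 = 0" using lin_linear linear_0 by blast
lemma lin_scaleR: "lin A \<Longrightarrow> A (scaleR c x) = scaleR c (A x)" using lin_linear linear_scale by blast

lemma lin_proj: "closed_subspace M \<Longrightarrow> lin (proj M)"
  by (simp add: lin_def proj_add proj_scaleC)

lemma bounded_op_lin: "bounded_op T \<Longrightarrow> lin T" by (simp add: bounded_op_def lin_def)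

lemma bounded_op_bounded_linear: assumes "bounded_op T" shows "bounded_linear T"
proof -
  obtain K where K: "\<And>x. norm (T x) \<le> K * norm x" using assms by (auto simp: bounded_op_def)
  show ?thesis
  proof (rule bounded_linear_intro[where K=K])
    show "T (x + y) = T x + T y" for x y using assms by (simp add: bounded_op_def)
    show "T (r *\<^sub>R x) = r *\<^sub>R T x" for r x using lin_scaleR[OF bounded_op_lin[OF assms]] .
    show "norm (T x) \<le> norm x * K" for x using K[of x] by (simp add: mult.commute)
  qed
qed

lemma bounded_op_K: assumes "bounded_op T" obtains K where "K \<ge> 0" "\<And>x. norm (T x) \<le> K * norm x"
proof -
  obtain K where K: "\<And>x. norm (T x) \<le> K * norm x" using assms by (auto simp: bounded_op_def)
  have "norm (T x) \<le> max K 0 * norm x" for x using K[of x] by (smt (verit) mult_right_mono norm_ge_zero)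
  then show ?thesis using that[of "max K 0"] by simp
qed

lemma proj_commute:
  assumes M: "closed_subspace M" and A: "lin A" and AM: "A ` M \<subseteq> M" and AO: "A ` orth M \<subseteq> orth M"
  shows "proj M (A x) = A (proj M x)"
proof (rule proj_unique[OF M])
  show "A (proj M x) \<in> M" using AM proj_in[OF M] by blast
  have "A x - A (proj M x) = A (x - proj M x)" using lin_diff[OF A] by simp
  then show "A x - A (proj M x) \<in> orth M" using AO proj_orth[OF M] by auto
qed

lemma riesz:
  fixes f :: "'a::chilbert_space \<Rightarrow> complex"
  assumes add: "\<And>x y. f (x + y) = f x + f y" and sc: "\<And>c x. f (scaleC c x) = c * f x"
    and bd: "\<And>x. cmod (f x) \<le> K * norm x"
  shows "\<exists>z. \<forall>x. f x = cinner z x"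
proof (cases "\<forall>x. f x = 0")
  case True then show ?thesis by (intro exI[of _ 0]) simp
next
  case False
  then obtain x0 where x0: "f x0 \<noteq> 0" by auto
  have bl: "bounded_linear f"
  proof (rule bounded_linear_intro[where K=K])
    show "f (x + y) = f x + f y" for x y by (rule add)
    show "f (r *\<^sub>R x) = r *\<^sub>R f x" for r x using sc[of "complex_of_real r" x] by (simp add: scaleR_scaleC scaleR_conv_of_real)
    show "norm (f x) \<le> norm x * K" for x using bd[of x] by (simp add: mult.commute)
  qed
  have fdiff: "f (x - y) = f x - f y" for x y using bl by (simp add: linear_diff bounded_linear.linear)
  define N where "N = {x. f x = 0}"
  have N: "closed_subspace N"
    unfolding closed_subspace_def N_def
  proof (intro conjI ballI allI)
    show "0 \<in> {x. f x = 0}" using bl by (simp add: linear_0 bounded_linear.linear)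
    show "closed {x. f x = 0}" by (intro closed_Collect_eq continuous_intros bounded_linear.continuous_on[OF bl])
  qed (auto simp: add sc)
  define u where "u = x0 - proj N x0"
  have uo: "u \<in> orth N" unfolding u_def by (rule proj_orth[OF N])
  have fu: "f u = f x0" using proj_in[OF N, of x0] by (simp add: u_def fdiff N_def)
  have "u \<noteq> 0" using fu x0 add[of 0 0] by auto
  then have uu: "cinner u u \<noteq> 0" using cinner_self_eq_zero by blast
  define z where "z = scaleC (cnj (f u / cinner u u)) u"
  have "f x = cinner z x" for x
  proof -
    have "f (scaleC (f x) u - scaleC (f u) x) = 0" by (simp add: fdiff sc)
    then have "scaleC (f x) u - scaleC (f u) x \<in> N" by (simp add: N_def)
    then have "cinner (scaleC (f x) u - scaleC (f u) x) u = 0" using uo by (simp add: orth_def)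
    then have "cnj (f x) * cinner u u = cnj (f u) * cinner x u"
      by (simp add: cinner_diff_left cinner_scaleC_left)
    then have "f x * cnj (cinner u u) = f u * cnj (cinner x u)"
      by (metis complex_cnj_cnj complex_cnj_mult)
    then have "f x * cinner u u = f u * cinner u x"
      by (metis cinner_commute)
    then show ?thesis using uu by (simp add: z_def cinner_scaleC_left field_simps)
  qed
  then show ?thesis by blast
qed

lemma adj_exists:
  assumes T: "bounded_op T"
  shows "\<exists>S. \<forall>x y. cinner (T x) y = cinner x (S y)"
proof -
  obtain K where K0: "K \<ge> 0" and K: "\<And>x. norm (T x) \<le> K * norm x" using bounded_op_K[OF T] by blast
  have "\<exists>z. \<forall>x. cinner y (T x) = cinner z x" for y
  proof (rule riesz[where K="norm y * K"])
    show "cinner y (T (x + x')) = cinner y (T x) + cinner y (T x')" for x x'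
      using T by (simp add: bounded_op_def cinner_add_right)
    show "cinner y (T (scaleC c x)) = c * cinner y (T x)" for c x
      using T by (simp add: bounded_op_def cinner_scaleC_right)
    show "cmod (cinner y (T x)) \<le> norm y * K * norm x" for x
      using cauchy_schwarz[of y "T x"] K[of x] by (smt (verit) mult.assoc mult_left_mono norm_ge_zero)
  qed
  then obtain S where S: "\<And>y x. cinner y (T x) = cinner (S y) x" by metis
  have "cinner (T x) y = cinner x (S y)" for x y
    by (metis S cinner_commute)
  then show ?thesis by blast
qed

lemma adj_prop: "bounded_op T \<Longrightarrow> cinner (T x) y = cinner x (adj T y)"
  unfolding adj_def using someI_ex[OF adj_exists] by blast

lemma adj_prop2: "bounded_op T \<Longrightarrow> cinner (adj T y) x = cinner y (T x)"
  by (metis adj_prop cinner_commute)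

lemma adj_unique:
  assumes "bounded_op T" "\<And>x y. cinner (T x) y = cinner x (S y)" shows "adj T = S"
proof
  fix y show "adj T y = S y" using assms adj_prop by (metis ext_cinner)
qed

lemma adj_bounded: assumes T: "bounded_op T" shows "bounded_op (adj T)"
proof -
  obtain K where K0: "K \<ge> 0" and K: "\<And>x. norm (T x) \<le> K * norm x" using bounded_op_K[OF T] by blast
  have "adj T (x + y) = adj T x + adj T y" for x y
    by (rule ext_cinner) (simp add: adj_prop[OF T, symmetric] cinner_add_right)
  moreover have "adj T (scaleC c x) = scaleC c (adj T x)" for c x
    by (rule ext_cinner) (simp add: adj_prop[OF T, symmetric] cinner_scaleC_right)
  moreover have "norm (adj T y) \<le> K * norm y" for y
  proof -
    have "(norm (adj T y))^2 = Re (cinner (T (adj T y)) y)"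
      by (simp add: norm_sq_cinner adj_prop[OF T])
    also have "\<dots> \<le> cmod (cinner (T (adj T y)) y)" by (rule complex_Re_le_cmod)
    also have "\<dots> \<le> norm (T (adj T y)) * norm y" by (rule cauchy_schwarz)
    also have "\<dots> \<le> K * norm (adj T y) * norm y" using K by (simp add: mult_right_mono)
    finally have h: "(norm (adj T y))^2 \<le> K * norm (adj T y) * norm y" .
    show ?thesis
    proof (cases "adj T y = 0")
      case True then show ?thesis using K0 by simp
    next
      case False
      then have "norm (adj T y) * norm (adj T y) \<le> norm (adj T y) * (K * norm y)"
        using h by (simp add: power2_eq_square mult_ac)
      then show ?thesis using False by simp
    qed
  qed
  ultimately show ?thesis unfolding bounded_op_def by blast
qed

lemma adj_adj: assumes T: "bounded_op T" shows "adj (adj T) = T"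
proof (rule adj_unique[OF adj_bounded[OF T]])
  show "cinner (adj T x) y = cinner x (T y)" for x y using adj_prop2[OF T, of x y] .
qed

lemma bounded_op_comp: assumes A: "bounded_op A" and B: "bounded_op B" shows "bounded_op (A \<circ> B)"
proof -
  obtain K where K0: "K \<ge> 0" and K: "\<And>x. norm (A x) \<le> K * norm x" using bounded_op_K[OF A] by blast
  obtain L where L0: "L \<ge> 0" and L: "\<And>x. norm (B x) \<le> L * norm x" using bounded_op_K[OF B] by blast
  have "norm (A (B x)) \<le> (K * L) * norm x" for x
    using K[of "B x"] L[of x] K0 by (smt (verit) mult.assoc mult_left_mono)
  then show ?thesis using A B by (auto simp: bounded_op_def)
qed

lemma bounded_op_id: "bounded_op (\<lambda>x. x)"
  by (auto simp: bounded_op_def intro!: exI[of _ 1])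

lemma adj_comp: assumes A: "bounded_op A" and B: "bounded_op B" shows "adj (A \<circ> B) = adj B \<circ> adj A"
  by (rule adj_unique[OF bounded_op_comp[OF A B]]) (simp add: adj_prop[OF A] adj_prop[OF B])

lemma bounded_op_continuous: "bounded_op T \<Longrightarrow> continuous_on S T"
  by (intro linear_continuous_on bounded_op_bounded_linear)

lemma cs_preimage: assumes T: "bounded_op T" and M: "closed_subspace M" shows "closed_subspace {x. T x \<in> M}"
  unfolding closed_subspace_def
proof (intro conjI ballI allI)
  have l: "lin T" using bounded_op_lin[OF T] .
  show "0 \<in> {x. T x \<in> M}" using cs_zero[OF M] lin_zero[OF l] by simp
  show "x + y \<in> {x. T x \<in> M}" if "x \<in> {x. T x \<in> M}" "y \<in> {x. T x \<in> M}" for x y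
    using that cs_add[OF M] lin_add[OF l] by simp
  show "scaleC c x \<in> {x. T x \<in> M}" if "x \<in> {x. T x \<in> M}" for c x
    using that cs_scaleC[OF M] lin_scaleC[OF l] by simp
  show "closed {x. T x \<in> M}"
    using closed_vimage[OF cs_closed[OF M] bounded_op_continuous[OF T]] by (simp add: vimage_def)
qed

lemma cs_Inter: "(\<And>i. i \<in> I \<Longrightarrow> closed_subspace (F i)) \<Longrightarrow> closed_subspace (\<Inter>i\<in>I. F i)"
  unfolding closed_subspace_def by (auto intro!: closed_INT)

lemma cs_Int: "closed_subspace A \<Longrightarrow> closed_subspace B \<Longrightarrow> closed_subspace (A \<inter> B)"
  unfolding closed_subspace_def by auto

lemma cs_zero_set: "closed_subspace {0::'a::chilbert_space}"
  unfolding closed_subspace_def by auto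

lemma cs_UNIV: "closed_subspace (UNIV::'a::chilbert_space set)"
  unfolding closed_subspace_def by auto


lemma scaleC_scaleR_comm: "scaleC c (scaleR a x) = scaleR a (scaleC c x)"
  by (simp add: scaleR_scaleC scaleC_scaleC mult.commute)

lemma bounded_op_add: assumes A: "bounded_op A" and B: "bounded_op B" shows "bounded_op (\<lambda>x. A x + B x)"
proof -
  obtain K where K0: "K \<ge> 0" and K: "\<And>x. norm (A x) \<le> K * norm x" using bounded_op_K[OF A] by blast
  obtain L where L0: "L \<ge> 0" and L: "\<And>x. norm (B x) \<le> L * norm x" using bounded_op_K[OF B] by blast
  have "norm (A x + B x) \<le> (K + L) * norm x" for x
    using K[of x] L[of x] norm_triangle_ineq[of "A x" "B x"] by (simp add: distrib_right)
  then show ?thesis using A B by (auto simp: bounded_op_def scaleC_add_right intro!: exI[of _ "K + L"])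
qed

lemma bounded_op_scaleR: assumes A: "bounded_op A" shows "bounded_op (\<lambda>x. scaleR a (A x))"
proof -
  obtain K where K0: "K \<ge> 0" and K: "\<And>x. norm (A x) \<le> K * norm x" using bounded_op_K[OF A] by blast
  have "norm (scaleR a (A x)) \<le> (\<bar>a\<bar> * K) * norm x" for x
    using K[of x] by (simp add: mult.assoc mult_left_mono)
  then show ?thesis using A by (auto simp: bounded_op_def scaleR_add_right scaleC_scaleR_comm intro!: exI[of _ "\<bar>a\<bar> * K"])
qed

lemma bounded_op_diff: assumes A: "bounded_op A" and B: "bounded_op B" shows "bounded_op (\<lambda>x. A x - B x)"
  using bounded_op_add[OF A bounded_op_scaleR[OF B, of "-1"]] by simp

definition QQ :: "('a::chilbert_space \<Rightarrow> 'a) \<Rightarrow> 'a \<Rightarrow> 'a" where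
  "QQ T x = adj T (T x)"

definition kerK :: "real \<Rightarrow> ('a::chilbert_space \<Rightarrow> 'a) \<Rightarrow> 'a set" where
  "kerK r T = {x. QQ T (QQ T x) - (1 + r^2) *\<^sub>R QQ T x + r^2 *\<^sub>R x = 0}"

fun word :: "('a::chilbert_space \<Rightarrow> 'a) \<Rightarrow> bool list \<Rightarrow> 'a \<Rightarrow> 'a" where
  "word T [] x = x"
| "word T (b # bs) x = (if b then T else adj T) (word T bs x)"

definition Lset :: "real \<Rightarrow> ('a::chilbert_space \<Rightarrow> 'a) \<Rightarrow> 'a set" where
  "Lset r T = {x. \<forall>bs. word T bs x \<in> kerK r T}"

lemma QQ_bounded: "bounded_op T \<Longrightarrow> bounded_op (QQ T)"
  using bounded_op_comp[OF adj_bounded] unfolding QQ_def comp_def by blast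

lemma QQ_lin: "bounded_op T \<Longrightarrow> lin (QQ T)" using QQ_bounded bounded_op_lin by blast

lemma QQ_selfadj: "bounded_op T \<Longrightarrow> cinner (QQ T x) y = cinner x (QQ T y)"
  unfolding QQ_def by (simp add: adj_prop2 adj_prop)

lemma kerK_cs: assumes T: "bounded_op T" shows "closed_subspace (kerK r T)"
proof -
  have q: "bounded_op (QQ T)" by (rule QQ_bounded[OF T])
  have qq: "bounded_op (\<lambda>x. QQ T (QQ T x))" using bounded_op_comp[OF q q] by (simp add: comp_def)
  have s1: "bounded_op (\<lambda>x. (1 + r^2) *\<^sub>R QQ T x)" by (rule bounded_op_scaleR[OF q])
  have s2: "bounded_op (\<lambda>x. r^2 *\<^sub>R x)" by (rule bounded_op_scaleR[OF bounded_op_id])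
  have b: "bounded_op (\<lambda>x. QQ T (QQ T x) - (1 + r^2) *\<^sub>R QQ T x + r^2 *\<^sub>R x)"
    using bounded_op_add[OF bounded_op_diff[OF qq s1] s2] by simp
  show ?thesis using cs_preimage[OF b cs_zero_set] by (simp add: kerK_def)
qed

lemma word_snoc: "word T (bs @ [b]) x = word T bs ((if b then T else adj T) x)"
  by (induction bs) auto

lemma word_bounded: "bounded_op T \<Longrightarrow> bounded_op (word T bs)"
proof (induction bs)
  case Nil
  have "word T [] = (\<lambda>x. x)" by (rule ext) simp
  then show ?case using bounded_op_id by simp
next
  case (Cons b bs)
  have w: "bounded_op (word T bs)" using Cons by blast
  show ?case
  proof (cases b)
    case True
    then have "word T (b # bs) = T \<circ> word T bs" by (auto simp: fun_eq_iff)
    then show ?thesis using bounded_op_comp[OF Cons.prems w] by (simp only:)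
  next
    case False
    then have "word T (b # bs) = adj T \<circ> word T bs" by (auto simp: fun_eq_iff)
    then show ?thesis using bounded_op_comp[OF adj_bounded[OF Cons.prems] w] by (simp only:)
  qed
qed

lemma Lset_cs: assumes T: "bounded_op T" shows "closed_subspace (Lset r T)"
proof -
  have "Lset r T = (\<Inter>bs\<in>UNIV. {x. word T bs x \<in> kerK r T})" by (auto simp: Lset_def)
  then show ?thesis by (simp only:) (rule cs_Inter, rule cs_preimage[OF word_bounded[OF T] kerK_cs[OF T]])
qed

lemma Lset_kerK: "Lset r T \<subseteq> kerK r T"
proof
  fix x assume "x \<in> Lset r T"
  then have "word T [] x \<in> kerK r T" unfolding Lset_def by blast
  then show "x \<in> kerK r T" by simp
qed

lemma Lset_T: assumes "x \<in> Lset r T" shows "T x \<in> Lset r T"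
proof -
  have "word T bs (T x) \<in> kerK r T" for bs
  proof -
    have "word T (bs @ [True]) x \<in> kerK r T" using assms unfolding Lset_def by blast
    then show ?thesis by (simp add: word_snoc)
  qed
  then show ?thesis by (simp add: Lset_def)
qed

lemma Lset_adj: assumes "x \<in> Lset r T" shows "adj T x \<in> Lset r T"
proof -
  have "word T bs (adj T x) \<in> kerK r T" for bs
  proof -
    have "word T (bs @ [False]) x \<in> kerK r T" using assms unfolding Lset_def by blast
    then show ?thesis by (simp add: word_snoc)
  qed
  then show ?thesis by (simp add: Lset_def)
qed

lemma word_commute:
  assumes "\<And>x. A (T x) = T (A x)" "\<And>x. A (adj T x) = adj T (A x)"
  shows "A (word T bs x) = word T bs (A x)"
  using assms by (induction bs) auto

lemma Lset_commute:
  assumes A: "lin A" and c1: "\<And>x. A (T x) = T (A x)" and c2: "\<And>x. A (adj T x) = adj T (A x)"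
    and x: "x \<in> Lset r T"
  shows "A x \<in> Lset r T"
proof -
  have cq: "A (QQ T y) = QQ T (A y)" for y by (simp add: QQ_def c1 c2)
  have K: "A y \<in> kerK r T" if "y \<in> kerK r T" for y
  proof -
    have "A (QQ T (QQ T y) - (1 + r^2) *\<^sub>R QQ T y + r^2 *\<^sub>R y) = 0" using that lin_zero[OF A] by (simp add: kerK_def)
    then show ?thesis by (simp add: kerK_def lin_add[OF A] lin_diff[OF A] lin_scaleR[OF A] cq)
  qed
  have "word T bs (A x) \<in> kerK r T" for bs
  proof -
    have "word T bs x \<in> kerK r T" using x by (simp add: Lset_def)
    then have "A (word T bs x) \<in> kerK r T" by (rule K)
    then show ?thesis using word_commute[of A T, OF c1 c2] by simp
  qed
  then show ?thesis by (simp add: Lset_def)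
qed

lemma Lset_max:
  assumes TM: "T ` M \<subseteq> M" and AM: "adj T ` M \<subseteq> M" and MK: "M \<subseteq> kerK r T"
  shows "M \<subseteq> Lset r T"
proof
  fix x assume x: "x \<in> M"
  have "word T bs x \<in> M" for bs using x TM AM by (induction bs) auto
  then show "x \<in> Lset r T" using MK by (auto simp: Lset_def)
qed

lemma red_adj:
  assumes T: "bounded_op T" and R: "reduces_in UNIV M T"
  shows "adj T ` M \<subseteq> M"
proof
  fix z assume "z \<in> adj T ` M"
  then obtain y where y: "y \<in> M" and z: "z = adj T y" by auto
  have M: "closed_subspace M" using R by (simp add: reduces_in_def)
  define q where "q = z - proj M z"
  have q: "q \<in> orth M" unfolding q_def by (rule proj_orth[OF M])
  have Tq: "T q \<in> orth M" using R q by (auto simp: reduces_in_def)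
  have "cinner q z = cinner (T q) y" by (simp add: z adj_prop[OF T])
  also have "\<dots> = 0" using orth_sym[OF y Tq] .
  finally have qz: "cinner q z = 0" .
  have "cinner q (proj M z) = 0" using orth_sym[OF proj_in[OF M] q] .
  then have "cinner q q = 0" using qz by (simp add: q_def cinner_diff_right)
  then have "q = 0" by (rule cinner_eq_zero_self)
  then show "z \<in> M" using proj_in[OF M, of z] by (simp add: q_def)
qed

lemma orth_inv_T:
  assumes T: "bounded_op T" and AM: "adj T ` M \<subseteq> M" shows "T ` orth M \<subseteq> orth M"
proof (safe)
  fix y assume y: "y \<in> orth M"
  show "T y \<in> orth M" unfolding orth_def
  proof (safe)
    fix x assume x: "x \<in> M"
    have "cinner x (T y) = cinner (adj T x) y" by (simp add: adj_prop2[OF T])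
    also have "\<dots> = 0" using AM x y by (auto simp: orth_def)
    finally show "cinner x (T y) = 0" .
  qed
qed

lemma orth_inv_adj:
  assumes T: "bounded_op T" and TM: "T ` M \<subseteq> M" shows "adj T ` orth M \<subseteq> orth M"
proof (safe)
  fix y assume y: "y \<in> orth M"
  show "adj T y \<in> orth M" unfolding orth_def
  proof (safe)
    fix x assume x: "x \<in> M"
    have "cinner x (adj T y) = cinner (T x) y" by (simp add: adj_prop[OF T])
    also have "\<dots> = 0" using TM x y by (auto simp: orth_def)
    finally show "cinner x (adj T y) = 0" .
  qed
qed

lemma red_intro:
  assumes T: "bounded_op T" and M: "closed_subspace M" and TM: "T ` M \<subseteq> M" and AM: "adj T ` M \<subseteq> M"
  shows "reduces_in UNIV M T"
  using orth_inv_T[OF T AM] M TM by (auto simp: reduces_in_def)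


lemma grp_id: "(a::'b::ab_group_add) - (a - b + c) = b - c" by (simp add: algebra_simps)

lemma C1r_sub:
  assumes T: "bounded_op T" and C: "C1r UNIV r T" and N: "closed_subspace N"
    and TN: "T ` N \<subseteq> N" and AN: "adj T ` N \<subseteq> N"
  shows "C1r N r T"
proof -
  have bij: "bij T" and nb: "\<And>x. norm (T x) \<le> norm x"
    and ib: "\<And>y. norm (r *\<^sub>R the_inv_into UNIV T y) \<le> norm y"
    using C by (auto simp: C1r_def)
  have inj: "inj T" using bij bij_betw_def by blast
  have l: "lin T" using bounded_op_lin[OF T] .
  have pre: "x \<in> N" if "T x \<in> N" for x
  proof -
    define q where "q = x - proj N x"
    have qo: "q \<in> orth N" unfolding q_def by (rule proj_orth[OF N])
    have "T q = T x - T (proj N x)" by (simp add: q_def lin_diff[OF l])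
    moreover have "T (proj N x) \<in> N" using TN proj_in[OF N] by blast
    ultimately have "T q \<in> N" using that cs_diff[OF N] by simp
    moreover have "T q \<in> orth N" using orth_inv_T[OF T AN] qo by blast
    ultimately have "T q = 0" using orth_inter by blast
    then have "T q = T 0" using lin_zero[OF l] by simp
    then have "q = 0" using inj by (simp add: inj_eq)
    then show "x \<in> N" using proj_in[OF N, of x] by (simp add: q_def)
  qed
  have onto: "T ` N = N"
  proof
    show "T ` N \<subseteq> N" by (rule TN)
    show "N \<subseteq> T ` N"
    proof
      fix y assume y: "y \<in> N"
      have "surj T" using bij by (rule bij_is_surj)
      then obtain x where x: "y = T x" using surjD[of T y] by blast
      have "T x \<in> N" using x y by simp
      then have "x \<in> N" by (rule pre)
      then show "y \<in> T ` N" using x by blast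
    qed
  qed
  have injN: "inj_on T N" using inj_on_subset[OF inj subset_UNIV] .
  have bN: "bij_betw T N N" using injN onto by (simp add: bij_betw_def)
  have inv: "the_inv_into N T y = the_inv_into UNIV T y" if y: "y \<in> N" for y
  proof -
    have "y \<in> T ` N" using onto y by (simp only:)
    then obtain x where x: "x \<in> N" "T x = y" by (rule imageE) simp
    have "the_inv_into N T y = x" by (rule the_inv_into_f_eq[OF injN x(2) x(1)])
    moreover have "the_inv_into UNIV T y = x" by (rule the_inv_into_f_eq[OF inj x(2)]) simp
    ultimately show ?thesis by simp
  qed
  show ?thesis unfolding C1r_def using bN nb ib inv by simp
qed

lemma Cscr_of_K:
  assumes T: "bounded_op T" and r0: "0 < r" and r1: "r < 1" and N: "closed_subspace N"
    and TN: "T ` N \<subseteq> N" and AN: "adj T ` N \<subseteq> N" and NK: "N \<subseteq> kerK r T"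
  shows "Cscr1r N r T"
proof -
  define c where "c = 1 / (1 - r^2)"
  have r2: "r^2 < 1" using r0 r1 by (simp add: power_less_one_iff abs_less_iff)
  have c1: "c - c * r^2 = 1" using r2 by (simp add: c_def field_simps)
  have ql: "lin (QQ T)" by (rule QQ_lin[OF T])
  have QN: "QQ T x \<in> N" if "x \<in> N" for x using TN AN that by (auto simp: QQ_def)
  define P0 where "P0 = (\<lambda>x. c *\<^sub>R (QQ T x - r^2 *\<^sub>R x))"
  define P1 where "P1 = (\<lambda>x. c *\<^sub>R (x - QQ T x))"
  have P0N: "P0 x \<in> N" if "x \<in> N" for x using that QN N by (simp add: P0_def cs_scaleR cs_diff)
  have P1N: "P1 x \<in> N" if "x \<in> N" for x using that QN N by (simp add: P1_def cs_scaleR cs_diff)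
  have calc: "P0 (P0 x) = P0 x \<and> P1 (P1 x) = P1 x \<and> P0 x + P1 x = x \<and> QQ T x = P0 x + r^2 *\<^sub>R P1 x"
    if x: "x \<in> N" for x
  proof -
    define v where "v a b = a *\<^sub>R QQ T x + b *\<^sub>R x" for a b
    have K0: "QQ T (QQ T x) - (1 + r^2) *\<^sub>R QQ T x + r^2 *\<^sub>R x = 0"
      using NK x by (auto simp: kerK_def)
    have K: "QQ T (QQ T x) = (1 + r^2) *\<^sub>R QQ T x - r^2 *\<^sub>R x"
    proof -
      have "QQ T (QQ T x) = QQ T (QQ T x) - (QQ T (QQ T x) - (1 + r^2) *\<^sub>R QQ T x + r^2 *\<^sub>R x)"
        using K0 by simp
      also have "\<dots> = (1 + r^2) *\<^sub>R QQ T x - r^2 *\<^sub>R x" by (rule grp_id)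
      finally show ?thesis .
    qed
    have Qv: "QQ T (v a b) = v (a*(1+r^2) + b) (-(a*r^2))" for a b
      by (simp add: v_def lin_add[OF ql] lin_scaleR[OF ql] K algebra_simps)
    have P0v: "P0 (v a b) = v (c*(a+b)) (-(c*r^2*(a+b)))" for a b
      by (simp add: P0_def Qv) (simp add: v_def algebra_simps)
    have P1v: "P1 (v a b) = v (-(c*(a*r^2+b))) (c*(b+a*r^2))" for a b
      by (simp add: P1_def Qv) (simp add: v_def algebra_simps)
    have vadd: "v a b + v a' b' = v (a + a') (b + b')" for a b a' b'
      by (simp add: v_def algebra_simps)
    have vsc: "k *\<^sub>R v a b = v (k*a) (k*b)" for k a b
      by (simp add: v_def algebra_simps)
    have x0: "x = v 0 1" by (simp add: v_def)
    have q0: "QQ T x = v 1 0" by (simp add: v_def)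
    have e1: "c * (c - c * r^2) = c" by (subst c1) simp
    have h: "c * r^2 - c = -1" using c1 by linarith
    have e2: "c * (c * r^2 - c) = - c" by (subst h) simp
    have a: "P0 x = v c (-(c*r^2))" by (subst x0, simp add: P0v)
    have b: "P1 x = v (-c) c" by (subst x0, simp add: P1v)
    have cc: "c + -(c*r^2) = 1" using c1 by linarith
    have f1: "P0 (P0 x) = P0 x" unfolding a P0v cc by simp
    have f2: "P1 (P1 x) = P1 x"
    proof -
      have cc2: "(- c) * r^2 + c = 1" using c1 by simp
      have cc3: "c + (- c) * r^2 = 1" using c1 by simp
      show ?thesis unfolding b P1v cc2 cc3 by simp
    qed
    have c1': "- (c * r^2) + c = 1" using c1 by linarith
    have c2: "c + r^2 * (-c) = 1"
    proof -
      have "c + r^2 * (-c) = c - c * r^2" by (simp add: algebra_simps)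
      also have "\<dots> = 1" by (rule c1)
      finally show ?thesis .
    qed
    have c3: "- (c * r^2) + r^2 * c = 0" by (simp add: algebra_simps)
    have f3: "P0 x + P1 x = x" unfolding a b vadd c1' by (simp add: x0)
    have f4: "QQ T x = P0 x + r^2 *\<^sub>R P1 x" unfolding a b vsc vadd q0 c2 c3 by simp
    show ?thesis using f1 f2 f3 f4 by blast
  qed
  have sa0: "cinner (P0 x) y = cinner x (P0 y)" for x y
    by (simp add: P0_def cinner_scaleR_left cinner_scaleR_right cinner_diff_left cinner_diff_right QQ_selfadj[OF T])
  have sa1: "cinner (P1 x) y = cinner x (P1 y)" for x y
    by (simp add: P1_def cinner_scaleR_left cinner_scaleR_right cinner_diff_left cinner_diff_right QQ_selfadj[OF T])
  have "orth_proj_on N P0" unfolding orth_proj_on_def using P0N calc sa0 by blast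
  moreover have "orth_proj_on N P1" unfolding orth_proj_on_def using P1N calc sa1 by blast
  moreover have "adjoint_on N T (adj T)" unfolding adjoint_on_def using AN adj_prop[OF T] by blast
  moreover have "\<forall>x\<in>N. adj T (T x) = P0 x + r^2 *\<^sub>R P1 x" using calc by (simp add: QQ_def)
  ultimately show ?thesis unfolding Cscr1r_def using calc by blast
qed

lemma K_of_Cscr:
  assumes T: "bounded_op T" and N: "closed_subspace N"
    and TN: "T ` N \<subseteq> N" and AN: "adj T ` N \<subseteq> N" and C: "Cscr1r N r T"
  shows "N \<subseteq> kerK r T"
proof -
  obtain P0 P1 S where P0: "orth_proj_on N P0" and P1: "orth_proj_on N P1"
    and sum: "\<forall>x\<in>N. P0 x + P1 x = x" and S: "adjoint_on N T S"
    and SJ: "\<forall>x\<in>N. S (T x) = P0 x + r^2 *\<^sub>R P1 x"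
    using C unfolding Cscr1r_def by blast
  have ql: "lin (QQ T)" by (rule QQ_lin[OF T])
  have Sadj: "S y = adj T y" if y: "y \<in> N" for y
  proof -
    define d where "d = S y - adj T y"
    have dN: "d \<in> N" unfolding d_def using S AN y N by (auto simp: adjoint_on_def intro!: cs_diff)
    have "cinner d (S y) = cinner (T d) y" using S dN y by (simp add: adjoint_on_def)
    also have "\<dots> = cinner d (adj T y)" by (simp add: adj_prop[OF T])
    finally have "cinner d d = 0" by (simp add: d_def cinner_diff_right)
    then have "d = 0" by (rule cinner_eq_zero_self)
    then show ?thesis by (simp add: d_def)
  qed
  have Qx: "QQ T x = P0 x + r^2 *\<^sub>R (x - P0 x)" if x: "x \<in> N" for x
  proof -
    have "P1 x = x - P0 x" using sum x by (metis add_diff_cancel_left')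
    moreover have "QQ T x = S (T x)" using Sadj x TN by (auto simp: QQ_def)
    ultimately show ?thesis using SJ x by simp
  qed
  show ?thesis
  proof
    fix x assume x: "x \<in> N"
    define p where "p = P0 x"
    have pN: "p \<in> N" using P0 x by (auto simp: orth_proj_on_def p_def)
    have pp: "P0 p = p" using P0 x by (auto simp: orth_proj_on_def p_def)
    have Qp: "QQ T p = p" using Qx[OF pN] pp by simp
    have Qx': "QQ T x = p + r^2 *\<^sub>R (x - p)" using Qx[OF x] by (simp add: p_def)
    have "QQ T (QQ T x) = QQ T (p + r^2 *\<^sub>R (x - p))" by (simp only: Qx')
    also have "\<dots> = QQ T p + r^2 *\<^sub>R (QQ T x - QQ T p)"
      by (simp add: lin_add[OF ql] lin_scaleR[OF ql] lin_diff[OF ql])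
    also have "\<dots> = p + r^2 *\<^sub>R (QQ T x - p)" by (simp only: Qp)
    also have "\<dots> = p + r^2 *\<^sub>R (p + r^2 *\<^sub>R (x - p) - p)" by (simp only: Qx')
    finally have QQQ: "QQ T (QQ T x) = p + r^2 *\<^sub>R (p + r^2 *\<^sub>R (x - p) - p)" .
    show "x \<in> kerK r T" unfolding kerK_def mem_Collect_eq QQQ unfolding Qx' by (simp add: algebra_simps)
  qed
qed

lemma red_TM: "reduces_in UNIV M T \<Longrightarrow> T ` M \<subseteq> M" by (simp add: reduces_in_def)
lemma red_cs: "reduces_in H M T \<Longrightarrow> closed_subspace M" by (simp add: reduces_in_def)

lemma lemA:
  assumes T: "bounded_op T" and R: "reduces_in UNIV M T" and C: "Cscr1r M r T"
  shows "M \<subseteq> Lset r T"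
  using Lset_max[OF red_TM[OF R] red_adj[OF T R] K_of_Cscr[OF T red_cs[OF R] red_TM[OF R] red_adj[OF T R] C]] .

lemma lemB:
  assumes T: "bounded_op T" and r0: "0 < r" and r1: "r < 1" and R: "reduces_in UNIV M T" and C: "cnu M r T"
  shows "M \<subseteq> orth (Lset r T)"
proof -
  have M: "closed_subspace M" using red_cs[OF R] .
  have TM: "T ` M \<subseteq> M" using red_TM[OF R] .
  have AM: "adj T ` M \<subseteq> M" using red_adj[OF T R] .
  have TO: "T ` orth M \<subseteq> orth M" using orth_inv_T[OF T AM] .
  have AO: "adj T ` orth M \<subseteq> orth M" using orth_inv_adj[OF T TM] .
  have pl: "lin (proj M)" using lin_proj[OF M] .
  have c1: "proj M (T x) = T (proj M x)" for x by (rule proj_commute[OF M bounded_op_lin[OF T] TM TO])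
  have c2: "proj M (adj T x) = adj T (proj M x)" for x
    by (rule proj_commute[OF M bounded_op_lin[OF adj_bounded[OF T]] AM AO])
  define N where "N = M \<inter> Lset r T"
  have N: "closed_subspace N" unfolding N_def using M Lset_cs[OF T] by (rule cs_Int)
  have TN: "T ` N \<subseteq> N" using TM Lset_T by (auto simp: N_def)
  have AN: "adj T ` N \<subseteq> N" using AM Lset_adj by (auto simp: N_def)
  have NK: "N \<subseteq> kerK r T" using Lset_kerK by (auto simp: N_def)
  have CN: "Cscr1r N r T" by (rule Cscr_of_K[OF T r0 r1 N TN AN NK])
  have "reduces_in M N T" unfolding reduces_in_def using N TN orth_inv_T[OF T AN] TM
    by (auto simp: N_def)
  then have N0: "N = {0}" using C CN unfolding cnu_def by blast
  show ?thesis
  proof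
    fix x assume x: "x \<in> M"
    show "x \<in> orth (Lset r T)" unfolding orth_def
    proof (safe)
      fix y assume y: "y \<in> Lset r T"
      have "proj M y \<in> Lset r T" by (rule Lset_commute[OF pl c1 c2 y])
      then have "proj M y \<in> N" using proj_in[OF M] by (simp add: N_def)
      then have "proj M y = 0" using N0 by simp
      then have "y \<in> orth M" using proj_orth[OF M, of y] by simp
      then show "cinner y x = 0" using orth_sym[OF x] by blast
    qed
  qed
qed

lemma lemE:
  assumes T: "bounded_op T" and R: "reduces_in H N T" and H: "closed_subspace H"
    and AH: "adj T ` H \<subseteq> H"
  shows "reduces_in UNIV N T"
proof -
  have N: "closed_subspace N" and NH: "N \<subseteq> H" and TN: "T ` N \<subseteq> N"
    and TO: "T ` (H \<inter> orth N) \<subseteq> H \<inter> orth N" using R by (auto simp: reduces_in_def)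
  have "T x \<in> orth N" if x: "x \<in> orth N" for x
  proof -
    define p where "p = proj H x"
    define q where "q = x - p"
    have q: "q \<in> orth H" unfolding q_def p_def by (rule proj_orth[OF H])
    have pH: "p \<in> H" unfolding p_def by (rule proj_in[OF H])
    have "p \<in> orth N" unfolding orth_def
    proof (safe)
      fix n assume n: "n \<in> N"
      have "cinner n x = 0" using x n by (simp add: orth_def)
      moreover have "cinner n q = 0" using q n NH by (auto simp: orth_def)
      ultimately show "cinner n p = 0" by (simp add: q_def cinner_diff_right)
    qed
    then have Tp: "T p \<in> orth N" using TO pH by blast
    have "T q \<in> orth H" using orth_inv_T[OF T AH] q by blast
    then have Tq: "T q \<in> orth N" using NH by (auto simp: orth_def)
    have "T x = T p + T q" by (simp add: q_def lin_add[OF bounded_op_lin[OF T], symmetric])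
    then show ?thesis using Tp Tq orth_cs cs_add by metis
  qed
  then show ?thesis using N TN by (auto simp: reduces_in_def)
qed


lemma UNIV_optype: "(UNIV :: optype set) = {t1, t2}"
  using optype.exhaust by auto

lemma sum_optype: "(\<Sum>t\<in>(UNIV::optype set). h t) = h t1 + h t2"
  by (simp add: UNIV_optype)

locale setting =
  fixes r :: real and d :: nat and T :: "nat \<Rightarrow> 'a::chilbert_space \<Rightarrow> 'a"
  assumes r0: "0 < r" and r1: "r < 1"
    and hyp: "\<forall>i\<in>{1..d}. bounded_op (T i) \<and> C1r UNIV r (T i)"
    and dc: "doubly_commuting d T"
begin

definition L :: "nat \<Rightarrow> 'a set" where "L j = Lset r (T j)"

definition HJ :: "nat set \<Rightarrow> (nat \<Rightarrow> optype) \<Rightarrow> 'a set" where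
  "HJ J \<omega> = (\<Inter>j\<in>J. if \<omega> j = t1 then L j else orth (L j))"

lemma Tb: "i \<in> {1..d} \<Longrightarrow> bounded_op (T i)" using hyp by blast
lemma TC: "i \<in> {1..d} \<Longrightarrow> C1r UNIV r (T i)" using hyp by blast
lemma Lcs: "j \<in> {1..d} \<Longrightarrow> closed_subspace (L j)" unfolding L_def using Lset_cs Tb by blast

lemma comm1: "i \<in> {1..d} \<Longrightarrow> j \<in> {1..d} \<Longrightarrow> T i (T j x) = T j (T i x)"
  using dc unfolding doubly_commuting_def by (metis comp_apply)

lemma comm2: "i \<in> {1..d} \<Longrightarrow> j \<in> {1..d} \<Longrightarrow> i \<noteq> j \<Longrightarrow> T i (adj (T j) x) = adj (T j) (T i x)"
  using dc unfolding doubly_commuting_def by (metis comp_apply)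

lemma comm3: assumes i: "i \<in> {1..d}" and j: "j \<in> {1..d}" shows "adj (T i) (adj (T j) x) = adj (T j) (adj (T i) x)"
proof -
  have "T j \<circ> T i = T i \<circ> T j" using comm1[OF i j] by (auto simp: fun_eq_iff)
  then have "adj (T j \<circ> T i) = adj (T i \<circ> T j)" by simp
  then have "adj (T i) \<circ> adj (T j) = adj (T j) \<circ> adj (T i)"
    by (simp add: adj_comp[OF Tb[OF j] Tb[OF i]] adj_comp[OF Tb[OF i] Tb[OF j]])
  then show ?thesis by (metis comp_apply)
qed

lemma L_T: assumes i: "i \<in> {1..d}" and j: "j \<in> {1..d}" and x: "x \<in> L j" shows "T i x \<in> L j"
proof (cases "i = j")
  case True then show ?thesis using x Lset_T by (simp add: L_def)
next
  case False
  show ?thesis unfolding L_def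
    by (rule Lset_commute[OF bounded_op_lin[OF Tb[OF i]] comm1[OF i j] comm2[OF i j False] x[unfolded L_def]])
qed

lemma L_adj: assumes i: "i \<in> {1..d}" and j: "j \<in> {1..d}" and x: "x \<in> L j" shows "adj (T i) x \<in> L j"
proof (cases "i = j")
  case True then show ?thesis using x Lset_adj by (simp add: L_def)
next
  case False
  have c1: "adj (T i) (T j y) = T j (adj (T i) y)" for y using comm2[OF j i] False by simp
  show ?thesis unfolding L_def
    by (rule Lset_commute[OF bounded_op_lin[OF adj_bounded[OF Tb[OF i]]] c1 comm3[OF i j] x[unfolded L_def]])
qed

lemma oL_T: "i \<in> {1..d} \<Longrightarrow> j \<in> {1..d} \<Longrightarrow> y \<in> orth (L j) \<Longrightarrow> T i y \<in> orth (L j)"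
  using orth_inv_T[OF Tb, of i "L j"] L_adj by blast

lemma oL_adj: "i \<in> {1..d} \<Longrightarrow> j \<in> {1..d} \<Longrightarrow> y \<in> orth (L j) \<Longrightarrow> adj (T i) y \<in> orth (L j)"
  using orth_inv_adj[OF Tb, of i "L j"] L_T by blast

lemma P_L: assumes k: "k \<in> {1..d}" and j: "j \<in> {1..d}" and x: "x \<in> L j" shows "proj (L k) x \<in> L j"
proof -
  have M: "closed_subspace (L k)" by (rule Lcs[OF k])
  have c1: "proj (L k) (T j y) = T j (proj (L k) y)" for y
    by (rule proj_commute[OF M bounded_op_lin[OF Tb[OF j]]]) (use L_T[OF j k] oL_T[OF j k] in auto)
  have c2: "proj (L k) (adj (T j) y) = adj (T j) (proj (L k) y)" for y
    by (rule proj_commute[OF M bounded_op_lin[OF adj_bounded[OF Tb[OF j]]]]) (use L_adj[OF j k] oL_adj[OF j k] in auto)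
  show ?thesis unfolding L_def[of j]
    by (rule Lset_commute[OF lin_proj[OF M] c1 c2 x[unfolded L_def[of j]]])
qed

lemma P_oL: assumes k: "k \<in> {1..d}" and j: "j \<in> {1..d}" and y: "y \<in> orth (L j)" shows "proj (L k) y \<in> orth (L j)"
  unfolding orth_def
proof (safe)
  fix x assume x: "x \<in> L j"
  have "cinner x (proj (L k) y) = cinner (proj (L k) x) y" by (simp add: proj_selfadj[OF Lcs[OF k]])
  also have "\<dots> = 0" using P_L[OF k j x] y by (simp add: orth_def)
  finally show "cinner x (proj (L k) y) = 0" .
qed

lemma HJ_cs: assumes J: "J \<subseteq> {1..d}" shows "closed_subspace (HJ J \<omega>)"
  unfolding HJ_def
proof (rule cs_Inter)
  fix j assume "j \<in> J"
  then have "j \<in> {1..d}" using J by blast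
  then show "closed_subspace (if \<omega> j = t1 then L j else orth (L j))" by (simp add: Lcs orth_cs)
qed

lemma HJ_inv:
  assumes J: "J \<subseteq> {1..d}" and A: "\<And>j y. j \<in> J \<Longrightarrow> y \<in> L j \<Longrightarrow> A y \<in> L j"
    and B: "\<And>j y. j \<in> J \<Longrightarrow> y \<in> orth (L j) \<Longrightarrow> A y \<in> orth (L j)"
    and x: "x \<in> HJ J \<omega>"
  shows "A x \<in> HJ J \<omega>"
  using x A B unfolding HJ_def by (auto split: if_splits)

lemma HJ_T: "J \<subseteq> {1..d} \<Longrightarrow> i \<in> {1..d} \<Longrightarrow> x \<in> HJ J \<omega> \<Longrightarrow> T i x \<in> HJ J \<omega>"
proof -
  assume J: "J \<subseteq> {1..d}" and v: "i \<in> {1..d}" and x: "x \<in> HJ J \<omega>"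
  show ?thesis
  proof (rule HJ_inv[where A="T i", OF J _ _ x])
    fix j y assume j: "j \<in> J"
    then have j': "j \<in> {1..d}" using J by blast
    show "T i y \<in> L j" if "y \<in> L j" using L_T[OF v j' that] .
    show "T i y \<in> orth (L j)" if "y \<in> orth (L j)" using oL_T[OF v j' that] .
  qed
qed

lemma HJ_adj: "J \<subseteq> {1..d} \<Longrightarrow> i \<in> {1..d} \<Longrightarrow> x \<in> HJ J \<omega> \<Longrightarrow> adj (T i) x \<in> HJ J \<omega>"
proof -
  assume J: "J \<subseteq> {1..d}" and v: "i \<in> {1..d}" and x: "x \<in> HJ J \<omega>"
  show ?thesis
  proof (rule HJ_inv[where A="adj (T i)", OF J _ _ x])
    fix j y assume j: "j \<in> J"
    then have j': "j \<in> {1..d}" using J by blast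
    show "adj (T i) y \<in> L j" if "y \<in> L j" using L_adj[OF v j' that] .
    show "adj (T i) y \<in> orth (L j)" if "y \<in> orth (L j)" using oL_adj[OF v j' that] .
  qed
qed

lemma HJ_P: "J \<subseteq> {1..d} \<Longrightarrow> k \<in> {1..d} \<Longrightarrow> x \<in> HJ J \<omega> \<Longrightarrow> proj (L k) x \<in> HJ J \<omega>"
proof -
  assume J: "J \<subseteq> {1..d}" and v: "k \<in> {1..d}" and x: "x \<in> HJ J \<omega>"
  show ?thesis
  proof (rule HJ_inv[where A="proj (L k)", OF J _ _ x])
    fix j y assume j: "j \<in> J"
    then have j': "j \<in> {1..d}" using J by blast
    show "proj (L k) y \<in> L j" if "y \<in> L j" using P_L[OF v j' that] .
    show "proj (L k) y \<in> orth (L j)" if "y \<in> orth (L j)" using P_oL[OF v j' that] .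
  qed
qed

lemma HJ_Q: assumes "J \<subseteq> {1..d}" "k \<in> {1..d}" "x \<in> HJ J \<omega>" shows "x - proj (L k) x \<in> HJ J \<omega>"
  using cs_diff[OF HJ_cs[OF assms(1)] assms(3) HJ_P[OF assms]] .

lemma HJ_cong: "(\<And>j. j \<in> J \<Longrightarrow> \<omega> j = \<omega>' j) \<Longrightarrow> HJ J \<omega> = HJ J \<omega>'"
  unfolding HJ_def by auto

lemma HJ_insert: "HJ (insert a J) \<omega> = (if \<omega> a = t1 then L a else orth (L a)) \<inter> HJ J \<omega>"
  unfolding HJ_def by simp

lemma decomp:
  assumes fin: "finite J" and J: "J \<subseteq> {1..d}"
  shows "\<exists>f. (\<forall>\<omega>\<in>J \<rightarrow>\<^sub>E (UNIV::optype set). f \<omega> \<in> HJ J \<omega>) \<and> x = (\<Sum>\<omega>\<in>J \<rightarrow>\<^sub>E (UNIV::optype set). f \<omega>)"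
  using fin J
proof (induction J arbitrary: x rule: finite_induct)
  case empty
  show ?case by (intro exI[of _ "\<lambda>_. x"]) (simp add: HJ_def)
next
  case (insert a J)
  have J: "J \<subseteq> {1..d}" and a: "a \<in> {1..d}" using insert.prems by auto
  obtain f where f: "\<forall>\<omega>\<in>J \<rightarrow>\<^sub>E (UNIV::optype set). f \<omega> \<in> HJ J \<omega>"
    and xs: "x = (\<Sum>\<omega>\<in>J \<rightarrow>\<^sub>E (UNIV::optype set). f \<omega>)" using insert.IH[OF J] by blast
  define P where "P = proj (L a)"
  have Pa: "closed_subspace (L a)" by (rule Lcs[OF a])
  define f' where "f' \<omega>' = (if \<omega>' a = t1 then P (f (\<omega>'(a := undefined)))
      else f (\<omega>'(a := undefined)) - P (f (\<omega>'(a := undefined))))" for \<omega>'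
  define PJ where "PJ = J \<rightarrow>\<^sub>E (UNIV::optype set)"
  have mem: "f' \<omega>' \<in> HJ (insert a J) \<omega>'" if w: "\<omega>' \<in> insert a J \<rightarrow>\<^sub>E (UNIV::optype set)" for \<omega>'
  proof -
    define \<omega> where "\<omega> = \<omega>'(a := undefined)"
    have wJ: "\<omega> \<in> PJ" unfolding \<omega>_def PJ_def by (rule fun_upd_in_PiE[OF insert.hyps(2) w])
    have fw: "f \<omega> \<in> HJ J \<omega>'"
    proof -
      have "f \<omega> \<in> HJ J \<omega>" using f wJ by (simp add: PJ_def)
      moreover have "HJ J \<omega> = HJ J \<omega>'" by (rule HJ_cong) (use insert.hyps(2) in \<open>auto simp: \<omega>_def\<close>)
      ultimately show ?thesis by simp
    qed
    show ?thesis
    proof (cases "\<omega>' a = t1")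
      case True
      have "P (f \<omega>) \<in> L a" unfolding P_def by (rule proj_in[OF Pa])
      moreover have "P (f \<omega>) \<in> HJ J \<omega>'" unfolding P_def by (rule HJ_P[OF J a fw])
      ultimately show ?thesis using True by (simp add: HJ_insert f'_def \<omega>_def)
    next
      case False
      have "f \<omega> - P (f \<omega>) \<in> orth (L a)" unfolding P_def by (rule proj_orth[OF Pa])
      moreover have "f \<omega> - P (f \<omega>) \<in> HJ J \<omega>'" unfolding P_def by (rule HJ_Q[OF J a fw])
      ultimately show ?thesis using False by (simp add: HJ_insert f'_def \<omega>_def)
    qed
  qed
  have inj: "inj_on (\<lambda>(y, g). g(a := y)) (UNIV \<times> PJ)"
  proof (rule inj_onI, clarify)
    fix y g y' g' assume g: "g \<in> PJ" and g': "g' \<in> PJ" and eq: "g(a := y) = g'(a := y')"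
    have "y = y'" using fun_cong[OF eq, of a] by simp
    moreover have "g = g'"
    proof
      fix z show "g z = g' z"
      proof (cases "z = a")
        case True then show ?thesis using g g' insert.hyps(2) PiE_arb by (metis PJ_def)
      next
        case False then show ?thesis using fun_cong[OF eq, of z] by simp
      qed
    qed
    ultimately show "y = y' \<and> g = g'" by simp
  qed
  have img: "insert a J \<rightarrow>\<^sub>E (UNIV::optype set) = (\<lambda>(y, g). g(a := y)) ` (UNIV \<times> PJ)"
    unfolding PJ_def by (rule PiE_insert_eq)
  have bk: "(g(a := t))(a := undefined) = g" if "g \<in> PJ" for g t
    using that insert.hyps(2) PiE_arb[of g J] by (auto simp: PJ_def fun_eq_iff)
  have "(\<Sum>\<omega>'\<in>insert a J \<rightarrow>\<^sub>E (UNIV::optype set). f' \<omega>') = (\<Sum>p\<in>UNIV \<times> PJ. f' ((\<lambda>(y, g). g(a := y)) p))"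
    unfolding img by (rule sum.reindex[OF inj, unfolded comp_def])
  also have "\<dots> = (\<Sum>y\<in>UNIV. \<Sum>g\<in>PJ. f' (g(a := y)))"
    by (simp add: sum.cartesian_product case_prod_beta)
  also have "\<dots> = (\<Sum>g\<in>PJ. \<Sum>y\<in>UNIV. f' (g(a := y)))" by (rule sum.swap)
  also have "\<dots> = (\<Sum>g\<in>PJ. f g)"
  proof (rule sum.cong[OF refl])
    fix g assume g: "g \<in> PJ"
    show "(\<Sum>y\<in>UNIV. f' (g(a := y))) = f g"
      using bk[OF g, of t1] unfolding sum_optype by (simp add: f'_def)
  qed
  also have "\<dots> = x" by (simp add: xs PJ_def)
  finally show ?case using mem by metis
qed

end


definition swp :: "nat \<Rightarrow> nat \<Rightarrow> nat \<Rightarrow> nat" where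
  "swp u v x = (if x = u then v else if x = v then u else x)"

lemma swp_bij: "u \<in> S \<Longrightarrow> v \<in> S \<Longrightarrow> bij_betw (swp u v) S S"
  by (rule bij_betw_byWitness[where f'="swp u v"]) (auto simp: swp_def)

lemma lab_exists:
  assumes fin: "finite A" and card: "card A = n" and a: "a \<in> A" and b: "b \<in> A" and ab: "(a = b) = (n = 1)"
  shows "\<exists>lab. bij_betw lab A {1..n} \<and> lab a = 1 \<and> lab b = n"
proof -
  have n1: "n \<ge> 1" using card fin a by (metis One_nat_def Suc_leI card_gt_0_iff empty_iff)
  obtain h where h: "bij_betw h A {1..n}" using finite_same_card_bij[OF fin finite_atLeastAtMost[of 1 n]] card by auto
  have ha: "h a \<in> {1..n}" using h a bij_betwE by blast
  define lab1 where "lab1 = swp (h a) 1 \<circ> h"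
  have b1: "bij_betw lab1 A {1..n}" unfolding lab1_def
    by (rule bij_betw_trans[OF h swp_bij[OF ha]]) (use n1 in simp)
  have l1a: "lab1 a = 1" by (simp add: lab1_def swp_def)
  have lb: "lab1 b \<in> {1..n}" using b1 b bij_betwE by blast
  define lab where "lab = swp (lab1 b) n \<circ> lab1"
  have bl: "bij_betw lab A {1..n}" unfolding lab_def
    by (rule bij_betw_trans[OF b1 swp_bij[OF lb]]) (use n1 in simp)
  have lbn: "lab b = n" by (simp add: lab_def swp_def)
  have lab_a: "lab a = 1"
  proof (cases "a = b")
    case True
    then have "n = 1" using ab by simp
    then show ?thesis using True l1a by (simp add: lab_def swp_def)
  next
    case False
    then have "n \<noteq> 1" using ab by simp
    moreover have "lab1 b \<noteq> 1"
    proof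
      assume "lab1 b = 1"
      then have "lab1 b = lab1 a" using l1a by simp
      then have "b = a" using b1 a b by (metis bij_betw_inv_into_left)
      then show False using False by simp
    qed
    ultimately show ?thesis using l1a by (simp add: lab_def swp_def)
  qed
  show ?thesis using bl lbn lab_a by blast
qed

lemma card_Omega: "card (Omega d) = 2^d"
  unfolding Omega_def by (simp add: card_PiE UNIV_optype numeral_2_eq_2)

lemma finite_Omega: "finite (Omega d)"
  unfolding Omega_def by (rule finite_PiE) (auto simp: UNIV_optype)

context setting
begin

definition H :: "(nat \<Rightarrow> optype) \<Rightarrow> 'a set" where "H \<omega> = HJ {1..d} \<omega>"

lemma H_cs: "closed_subspace (H \<omega>)" unfolding H_def by (rule HJ_cs) simp

lemma H_T: "i \<in> {1..d} \<Longrightarrow> T i ` H \<omega> \<subseteq> H \<omega>" unfolding H_def using HJ_T by blast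
lemma H_adj: "i \<in> {1..d} \<Longrightarrow> adj (T i) ` H \<omega> \<subseteq> H \<omega>" unfolding H_def using HJ_adj by blast

lemma H_red: "i \<in> {1..d} \<Longrightarrow> reduces_in UNIV (H \<omega>) (T i)"
  by (rule red_intro[OF Tb H_cs H_T H_adj])

lemma H_L: "i \<in> {1..d} \<Longrightarrow> \<omega> i = t1 \<Longrightarrow> H \<omega> \<subseteq> L i"
  unfolding H_def HJ_def by auto

lemma H_oL: "i \<in> {1..d} \<Longrightarrow> \<omega> i = t2 \<Longrightarrow> H \<omega> \<subseteq> orth (L i)"
  unfolding H_def HJ_def by auto

lemma H_type: assumes i: "i \<in> {1..d}" shows "has_type (H \<omega>) r (T i) (\<omega> i)"
proof -
  have C: "C1r (H \<omega>) r (T i)" by (rule C1r_sub[OF Tb[OF i] TC[OF i] H_cs H_T[OF i] H_adj[OF i]])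
  show ?thesis
  proof (cases "\<omega> i")
    case t1
    have "H \<omega> \<subseteq> kerK r (T i)" using H_L[of i \<omega>, OF i t1] Lset_kerK by (auto simp: L_def)
    then have "Cscr1r (H \<omega>) r (T i)" by (rule Cscr_of_K[OF Tb[OF i] r0 r1 H_cs H_T[OF i] H_adj[OF i]])
    then show ?thesis using C t1 by simp
  next
    case t2
    have "\<not> (\<exists>M. M \<noteq> {0} \<and> reduces_in (H \<omega>) M (T i) \<and> Cscr1r M r (T i))"
    proof
      assume "\<exists>M. M \<noteq> {0} \<and> reduces_in (H \<omega>) M (T i) \<and> Cscr1r M r (T i)"
      then obtain M where M0: "M \<noteq> {0}" and R: "reduces_in (H \<omega>) M (T i)" and CM: "Cscr1r M r (T i)" by blast
      have RU: "reduces_in UNIV M (T i)" by (rule lemE[OF Tb[OF i] R H_cs H_adj[OF i]])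
      have mL: "M \<subseteq> L i" unfolding L_def by (rule lemA[OF Tb[OF i] RU CM])
      have MH: "M \<subseteq> H \<omega>" using R by (simp add: reduces_in_def)
      have "M \<subseteq> {0}" using mL MH H_oL[of i \<omega>, OF i t2] orth_inter by blast
      moreover have "0 \<in> M" using red_cs[OF R] cs_zero by blast
      ultimately show False using M0 by blast
    qed
    then show ?thesis using C t2 by (simp add: cnu_def)
  qed
qed

lemma H_orth:
  assumes w: "\<omega> \<in> Omega d" and w': "\<omega>' \<in> Omega d" and ne: "\<omega> \<noteq> \<omega>'" and x: "x \<in> H \<omega>" and y: "y \<in> H \<omega>'"
  shows "cinner x y = 0"
proof -
  obtain i where i: "i \<in> {1..d}" and ni: "\<omega> i \<noteq> \<omega>' i"
    using PiE_ext[of \<omega> "{1..d}" "\<lambda>_. UNIV" \<omega>'] w w' ne by (auto simp: Omega_def)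
  show ?thesis
  proof (cases "\<omega> i")
    case t1
    then have "\<omega>' i = t2" using ni by (cases "\<omega>' i") auto
    then have "y \<in> orth (L i)" using H_oL[of i \<omega>', OF i] y by blast
    moreover have "x \<in> L i" using H_L[of i \<omega>, OF i t1] x by blast
    ultimately show ?thesis by (simp add: orth_def)
  next
    case t2
    then have "\<omega>' i = t1" using ni by (cases "\<omega>' i") auto
    then have "y \<in> L i" using H_L[of i \<omega>', OF i] y by blast
    moreover have "x \<in> orth (L i)" using H_oL[of i \<omega>, OF i t2] x by blast
    ultimately show ?thesis using orth_sym by blast
  qed
qed

lemma H_sub:
  assumes hyp: "\<forall>i\<in>{1..d}. reduces_in UNIV M (T i) \<and> has_type M r (T i) (\<omega> i)"
  shows "M \<subseteq> H \<omega>"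
proof
  fix x assume x: "x \<in> M"
  have "x \<in> (if \<omega> i = t1 then L i else orth (L i))" if i: "i \<in> {1..d}" for i
  proof -
    have ht: "has_type M r (T i) (\<omega> i)" using hyp i by blast
    show ?thesis
  proof (cases "\<omega> i")
    case t1
    then have "Cscr1r M r (T i)" using ht by simp
    then have "M \<subseteq> L i" unfolding L_def using lemA[OF Tb[OF i]] hyp i by blast
    then show ?thesis using x t1 by auto
  next
    case t2
    then have "cnu M r (T i)" using ht by simp
    then have "M \<subseteq> orth (L i)" unfolding L_def using lemB[OF Tb[OF i] r0 r1] hyp i by blast
    then show ?thesis using x t2 by auto
  qed
  qed
  then show "x \<in> H \<omega>" unfolding H_def HJ_def by blast
qed

end


context setting
begin

definition all1 :: "nat \<Rightarrow> optype" where "all1 = (\<lambda>j. if j \<in> {1..d} then t1 else undefined)"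
definition all2 :: "nat \<Rightarrow> optype" where "all2 = (\<lambda>j. if j \<in> {1..d} then t2 else undefined)"

lemma all1_in: "all1 \<in> Omega d" by (auto simp: Omega_def all1_def PiE_def extensional_def)
lemma all2_in: "all2 \<in> Omega d" by (auto simp: Omega_def all2_def PiE_def extensional_def)

lemma all_eq: "(all1 = all2) = (2^d = (1::nat))"
proof (cases "d = 0")
  case True then show ?thesis unfolding all1_def all2_def by simp
next
  case False
  then have "all1 1 \<noteq> all2 1" by (simp add: all1_def all2_def)
  moreover have "2^d \<noteq> (1::nat)" using False by simp
  ultimately show ?thesis by auto
qed

lemma uniq_sub:
  assumes D: "is_decomposition d r T Hs' lab'" and w: "\<omega> \<in> Omega d"
  shows "Hs' (lab' \<omega>) \<subseteq> H \<omega>"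
proof -
  have bij: "bij_betw lab' (Omega d) {1..2^d}" using D by (simp add: is_decomposition_def)
  have j: "lab' \<omega> \<in> {1..2^d}" using bij_betwE[OF bij] w by blast
  have red: "\<forall>i\<in>{1..d}. reduces_in UNIV (Hs' (lab' \<omega>)) (T i)" using D j by (simp add: is_decomposition_def)
  have ty: "\<forall>i\<in>{1..d}. has_type (Hs' (lab' \<omega>)) r (T i) (\<omega> i)" using D w by (simp add: is_decomposition_def)
  show ?thesis by (rule H_sub) (use red ty in blast)
qed

lemma uniq:
  assumes D: "is_decomposition d r T Hs' lab'" and w: "\<omega> \<in> Omega d"
  shows "Hs' (lab' \<omega>) = H \<omega>"
proof
  show "Hs' (lab' \<omega>) \<subseteq> H \<omega>" by (rule uniq_sub[OF D w])
  show "H \<omega> \<subseteq> Hs' (lab' \<omega>)"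
  proof
    fix x assume x: "x \<in> H \<omega>"
    have bij: "bij_betw lab' (Omega d) {1..2^d}" using D by (simp add: is_decomposition_def)
    have cs': "\<forall>j\<in>{1..2^d}. closed_subspace (Hs' j)" using D by (simp add: is_decomposition_def)
    have sumD: "\<forall>x. \<exists>f. (\<forall>j\<in>{1..2^d}. f j \<in> Hs' j) \<and> x = (\<Sum>j=1..2^d. f j)"
      using D unfolding is_decomposition_def by (elim conjE)
    obtain f where f: "\<forall>j\<in>{1..2^d}. f j \<in> Hs' j" and xs: "x = (\<Sum>j=1..2^d. f j)"
      using spec[OF sumD, of x] by blast
    define j0 where "j0 = lab' \<omega>"
    have j0: "j0 \<in> {1..2^d}" unfolding j0_def using bij_betwE[OF bij] w by blast
    have "f j0 \<in> Hs' j0" using f j0 by blast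
    then have fj0: "f j0 \<in> H \<omega>" using uniq_sub[OF D w] unfolding j0_def by blast
    have oth: "cinner z (f j) = 0" if z: "z \<in> H \<omega>" and j: "j \<in> {1..2^d} - {j0}" for z j
    proof -
      define \<omega>' where "\<omega>' = the_inv_into (Omega d) lab' j"
      have w': "\<omega>' \<in> Omega d" unfolding \<omega>'_def using bij_betwE[OF bij_betw_the_inv_into[OF bij]] j by blast
      have lw: "lab' \<omega>' = j" unfolding \<omega>'_def by (rule f_the_inv_into_f_bij_betw[OF bij]) (use j in blast)
      have ne: "\<omega> \<noteq> \<omega>'" using lw j by (auto simp: j0_def)
      have "f j \<in> Hs' j" using f j by blast
      then have "f j \<in> Hs' (lab' \<omega>')" using lw by simp
      then have "f j \<in> H \<omega>'" using uniq_sub[OF D w'] by blast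
      then show ?thesis using H_orth[OF w w' ne z] by blast
    qed
    define u where "u = x - f j0"
    have u: "u = (\<Sum>j\<in>{1..2^d} - {j0}. f j)"
      unfolding u_def xs using sum.remove[OF finite_atLeastAtMost j0, of f] by (simp add: algebra_simps)
    have uH: "u \<in> H \<omega>" unfolding u_def using cs_diff[OF H_cs x fj0] .
    have "cinner u u = (\<Sum>j\<in>{1..2^d} - {j0}. cinner u (f j))" unfolding u[symmetric] by (subst u) (rule cinner_sum_right)
    also have "\<dots> = 0" using oth[OF uH] by simp
    finally have "u = 0" by (rule cinner_eq_zero_self)
    then have "x = f j0" by (simp add: u_def)
    then show "x \<in> Hs' (lab' \<omega>)" using f j0 by (simp add: j0_def)
  qed
qed

theorem main:
  "\<exists>Hs lab. is_decomposition d r T Hs lab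
     \<and> (\<forall>Hs' lab'. is_decomposition d r T Hs' lab' \<longrightarrow> (\<forall>\<omega>\<in>Omega d. Hs' (lab' \<omega>) = Hs (lab \<omega>)))"
proof -
  obtain lab :: "(nat \<Rightarrow> optype) \<Rightarrow> nat" where bij: "bij_betw lab (Omega d) {1..2^d}" and l1: "lab all1 = 1" and l2: "lab all2 = 2^d"
    using lab_exists[OF finite_Omega card_Omega all1_in all2_in all_eq] by blast
  define g where "g = the_inv_into (Omega d) lab"
  have gin: "g j \<in> Omega d" if "j \<in> {1..2^d}" for j
    unfolding g_def using bij_betwE[OF bij_betw_the_inv_into[OF bij]] that by blast
  have lg: "lab (g j) = j" if "j \<in> {1..2^d}" for j
    unfolding g_def by (rule f_the_inv_into_f_bij_betw[OF bij]) (use that in blast)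
  have gl: "g (lab \<omega>) = \<omega>" if "\<omega> \<in> Omega d" for \<omega>
    unfolding g_def using the_inv_into_f_f[OF bij_betw_imp_inj_on[OF bij] that] .
  define Hs where "Hs j = H (g j)" for j
  have HsL: "Hs (lab \<omega>) = H \<omega>" if "\<omega> \<in> Omega d" for \<omega> by (simp add: Hs_def gl[OF that])
  have Hs1: "Hs 1 = H all1" using HsL[OF all1_in] l1 by simp
  have Hs2: "Hs (2^d) = H all2" using HsL[OF all2_in] l2 by simp
  have dec: "is_decomposition d r T Hs lab"
    unfolding is_decomposition_def
  proof (intro conjI ballI allI impI)
    show "closed_subspace (Hs j)" for j by (simp add: Hs_def H_cs)
    show "cinner x y = 0" if j: "j \<in> {1..2^d}" and k: "k \<in> {1..2^d}" and ne: "j \<noteq> k"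
      and x: "x \<in> Hs j" and y: "y \<in> Hs k" for j k x y
    proof -
      have "g j \<noteq> g k" using lg[OF j] lg[OF k] ne by metis
      then show ?thesis using H_orth[OF gin[OF j] gin[OF k]] x y by (simp add: Hs_def)
    qed
    show "\<exists>f. (\<forall>j\<in>{1..2^d}. f j \<in> Hs j) \<and> x = (\<Sum>j=1..2^d. f j)" for x
    proof -
      obtain f where f: "\<forall>\<omega>\<in>{1..d} \<rightarrow>\<^sub>E (UNIV::optype set). f \<omega> \<in> HJ {1..d} \<omega>"
        and xs: "x = (\<Sum>\<omega>\<in>{1..d} \<rightarrow>\<^sub>E (UNIV::optype set). f \<omega>)"
        using decomp[of "{1..d}" x] by auto
      define F where "F j = f (g j)" for j
      have "(\<Sum>j=1..2^d. F j) = (\<Sum>\<omega>\<in>Omega d. F (lab \<omega>))" by (rule sum.reindex_bij_betw[OF bij, symmetric])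
      also have "\<dots> = (\<Sum>\<omega>\<in>Omega d. f \<omega>)" by (rule sum.cong) (simp_all add: F_def gl)
      also have "\<dots> = x" by (simp add: xs Omega_def)
      finally have "x = (\<Sum>j=1..2^d. F j)" by simp
      moreover have "\<forall>j\<in>{1..2^d}. F j \<in> Hs j"
        using f gin by (auto simp: F_def Hs_def H_def Omega_def)
      ultimately show ?thesis by blast
    qed
    show "reduces_in UNIV (Hs j) (T i)" if "i \<in> {1..d}" for i j unfolding Hs_def by (rule H_red[OF that])
    show "has_type (Hs j) r (T i) t1 \<or> has_type (Hs j) r (T i) t2" if i: "i \<in> {1..d}" for i j
      using H_type[OF i, of "g j"] by (cases "g j i") (auto simp: Hs_def)
    show "bij_betw lab (Omega d) {1..2^d}" by (rule bij)
    show "has_type (Hs (lab \<omega>)) r (T j) (\<omega> j)" if "\<omega> \<in> Omega d" "j \<in> {1..d}" for \<omega> j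
      using H_type[OF that(2)] HsL[OF that(1)] by simp
    show "has_type (Hs 1) r (T i) t1" if i: "i \<in> {1..d}" for i
      unfolding Hs1 using H_type[OF i, of all1] i by (simp add: all1_def)
    show "M \<subseteq> Hs 1" if "\<forall>i\<in>{1..d}. reduces_in UNIV M (T i) \<and> has_type M r (T i) t1" for M
      unfolding Hs1 by (rule H_sub) (use that in \<open>simp add: all1_def\<close>)
    show "has_type (Hs (2^d)) r (T i) t2" if i: "i \<in> {1..d}" for i
      unfolding Hs2 using H_type[OF i, of all2] i by (simp add: all2_def)
    show "M \<subseteq> Hs (2^d)" if "\<forall>i\<in>{1..d}. reduces_in UNIV M (T i) \<and> has_type M r (T i) t2" for M
      unfolding Hs2 by (rule H_sub) (use that in \<open>simp add: all2_def\<close>)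
  qed
  have "\<forall>Hs' lab'. is_decomposition d r T Hs' lab' \<longrightarrow> (\<forall>\<omega>\<in>Omega d. Hs' (lab' \<omega>) = Hs (lab \<omega>))"
    using uniq HsL by simp
  then show ?thesis using dec by blast
qed

end

theorem theorem3p7:
  fixes r :: real and d :: nat and T :: "nat \<Rightarrow> 'a::chilbert_space \<Rightarrow> 'a"
  assumes "0 < r" and "r < 1"
    and "\<forall>i\<in>{1..d}. bounded_op (T i) \<and> C1r UNIV r (T i)"
    and "doubly_commuting d T"
  shows "\<exists>Hs lab. is_decomposition d r T Hs lab
           \<and> (\<forall>Hs' lab'. is_decomposition d r T Hs' lab' \<longrightarrow> (\<forall>\<omega>\<in>Omega d. Hs' (lab' \<omega>) = Hs (lab \<omega>)))"
proof -
  interpret setting r d T using assms by (unfold_locales) auto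
  show ?thesis by (rule main)
qed


end
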